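(* Let $m,n,p\ge1$, $B\in\mathbb{R}^{m\times n}$, let $J:\mathbb{R}^p\to\mathbb{R}^{m\times n}$ be linear with adjoint $J^*$ and $J^*J$ invertible, and let $\lambda>0$. Consider the problem $$\min_{X,E,\Delta\tau}\big\{\|X\|_*+\lambda\|E\|_1:\ B+J\Delta\tau=X+E\big\}\qquad (P)$$ over $X,E\in\mathbb{R}^{m\times n}$, $\Delta\tau\in\mathbb{R}^p$. Fix $\sigma>0$ and $\xi\in(0,(1+\sqrt5)/2)$, a starting point $(X^0,\Delta\tau^0,E^0,Y^0)$, and generate for $k=0,1,\dots$ (sGS-ADMM): 1. $X^{k+1}=\mathcal{D}_{1/\sigma}(B+J\Delta\tau^k-E^k+Y^k/\sigma)$; 2. $\Delta\tau^{k+1/2}=-(J^*J)^{-1}[J^*(B-X^{k+1}-E^k)+J^*Y^k/\sigma]$; 3. $E^{k+1}=\mathcal{S}_{\lambda/\sigma}(B+J\Delta\tau^{k+1/2}-X^{k+1}+Y^k/\sigma)$; 4. $\Delta\tau^{k+1}=-(J^*J)^{-1}[J^*(B-X^{k+1}-E^{k+1})+J^*Y^k/\sigma]$; 5. $Y^{k+1}=Y^k+\xi\sigma(B+J\Delta\tau^{k+1}-X^{k+1}-E^{k+1})$. Then the sequence $\{(X^k,\Delta\tau^k,E^k,Y^k)\}$ converges to a limit $(\bar X,\Delta\bar\tau,\bar E,\bar Y)$ such that $(\bar X,\Delta\bar\tau,\bar E)$ is an optimal solution of $(P)$.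
   Context: $\|X\|_*$ is the nuclear norm, $\|E\|_1$ the entrywise $\ell_1$ norm, $\|\cdot\|_F$ the Frobenius norm. For $\mu>0$, $\mathcal{D}_\mu(X)=\operatorname{argmin}_Y\{\|Y\|_*+\frac1{2\mu}\|Y-X\|_F^2\}=U\,\mathrm{diag}(\max\{\sigma_i-\mu,0\})V^\top$ where $X=U\,\mathrm{diag}(\sigma_i)V^\top$ is an SVD (singular value thresholding), and $\mathcal{S}_\mu(X)$ is the entrywise soft-thresholding $[\mathcal{S}_\mu(X)]_{ij}=\mathrm{sgn}(X_{ij})\max\{|X_{ij}|-\mu,0\}$. In the application $B=D\circ\tau$ is the current (normalized) transformed image and $J$ its Jacobian with respect to the transform parameters. *)

theory Defs
  imports "HOL-Analysis.Analysis"
begin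

text \<open>Matrices in R^(m x n) are represented as real^'n^'m (row index 'm, column index 'n).
The Frobenius norm is the library norm on this type and the Frobenius inner product
is the library inner product.\<close>

text \<open>Singular value decomposition X = U S V^T, with U, V orthogonal and S a
nonnegative rectangular "diagonal" matrix: every row and every column of S has at
most one nonzero entry (a diagonal up to a permutation of the index sets, which
are finite types without a canonical order).\<close>
definition is_svd :: "real^'n^'m \<Rightarrow> real^'m^'m \<Rightarrow> real^'n^'m \<Rightarrow> real^'n^'n \<Rightarrow> bool" where
  "is_svd X U S V \<longleftrightarrow> orthogonal_matrix U \<and> orthogonal_matrix V \<and>
     (\<forall>i j. S$i$j \<ge> 0) \<and>
     (\<forall>i j j'. S$i$j \<noteq> 0 \<longrightarrow> S$i$j' \<noteq> 0 \<longrightarrow> j = j') \<and>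
     (\<forall>i i' j. S$i$j \<noteq> 0 \<longrightarrow> S$i'$j \<noteq> 0 \<longrightarrow> i = i') \<and>
     X = U ** S ** transpose V"

definition nuc_norm :: "real^'n^'m \<Rightarrow> real" where
  "nuc_norm X = (SOME s. \<exists>U S V. is_svd X U S V \<and> s = (\<Sum>i\<in>UNIV. \<Sum>j\<in>UNIV. S$i$j))"

definition l1_norm :: "real^'n^'m \<Rightarrow> real" where
  "l1_norm E = (\<Sum>i\<in>UNIV. \<Sum>j\<in>UNIV. \<bar>E$i$j\<bar>)"

text \<open>Singular value thresholding, as the proximal map of the nuclear norm.\<close>
definition svt :: "real \<Rightarrow> real^'n^'m \<Rightarrow> real^'n^'m" where
  "svt \<mu> X = (THE Y. \<forall>Z. nuc_norm Y + (1 / (2*\<mu>)) * (norm (Y - X))\<^sup>2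
                          \<le> nuc_norm Z + (1 / (2*\<mu>)) * (norm (Z - X))\<^sup>2)"

definition soft :: "real \<Rightarrow> real^'n^'m \<Rightarrow> real^'n^'m" where
  "soft \<mu> X = (\<chi> i j. sgn (X$i$j) * max (\<bar>X$i$j\<bar> - \<mu>) 0)"

definition optimal_P ::
  "real^'n^'m \<Rightarrow> (real^'p \<Rightarrow> real^'n^'m) \<Rightarrow> real \<Rightarrow> real^'n^'m \<Rightarrow> real^'p \<Rightarrow> real^'n^'m \<Rightarrow> bool" where
  "optimal_P B J lam X dt E \<longleftrightarrow> B + J dt = X + E \<and>
     (\<forall>X' dt' E'. B + J dt' = X' + E' \<longrightarrow> nuc_norm X + lam * l1_norm E \<le> nuc_norm X' + lam * l1_norm E')"

end

theory Submission
  imports Defs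
begin

lemma sym_inner:
  fixes A :: "real^'n^'n"
  assumes "transpose A = A"
  shows "x \<bullet> (A *v y) = (A *v x) \<bullet> y"
proof -
  have "x \<bullet> (A *v y) = (x v* A) \<bullet> y" by (simp add: dot_lmul_matrix)
  also have "x v* A = transpose A *v x" by simp
  finally show ?thesis using assms by simp
qed

lemma quad_nonpos_zero:
  fixes c d :: real
  assumes "\<And>t. 2*t*c + t^2*d \<le> 0"
  shows "c = 0"
proof -
  define t where "t = c / (\<bar>d\<bar> + 1)"
  have pos: "\<bar>d\<bar> + 1 > 0" by simp
  have "2*t*c + t^2*d \<le> 0" by (rule assms)
  hence "(2*t*c + t^2*d) * (\<bar>d\<bar> + 1)^2 \<le> 0"
    by (simp add: mult_nonpos_nonneg)
  moreover have "(2*t*c + t^2*d) * (\<bar>d\<bar> + 1)^2 = c^2 * (2*\<bar>d\<bar> + 2 + d)"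
  proof -
    have tD: "t * (\<bar>d\<bar> + 1) = c" using pos unfolding t_def by simp
    have "(2*t*c + t^2*d) * (\<bar>d\<bar> + 1)^2 = 2*(t * (\<bar>d\<bar> + 1))*c*(\<bar>d\<bar> + 1) + (t * (\<bar>d\<bar> + 1))^2*d"
      by (simp add: power2_eq_square algebra_simps)
    also have "\<dots> = c^2 * (2*\<bar>d\<bar> + 2 + d)" unfolding tD by (simp add: power2_eq_square algebra_simps)
    finally show ?thesis .
  qed
  ultimately have "c^2 * (2*\<bar>d\<bar> + 2 + d) \<le> 0" by simp
  moreover have "2*\<bar>d\<bar> + 2 + d > 0" by linarith
  ultimately have "c^2 \<le> 0" by (simp add: mult_le_0_iff)
  thus ?thesis by simp
qed

lemma rayleigh_eig:
  fixes A :: "real^'n^'n"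
  assumes sym: "transpose A = A" and S: "subspace S" and v: "v \<in> S" "norm v = 1"
    and inv: "\<And>x. x \<in> S \<Longrightarrow> A *v x \<in> S"
    and mx: "\<And>y. y \<in> S \<Longrightarrow> norm y = 1 \<Longrightarrow> y \<bullet> (A *v y) \<le> v \<bullet> (A *v v)"
  shows "A *v v = (v \<bullet> (A *v v)) *\<^sub>R v"
proof -
  define l where "l = v \<bullet> (A *v v)"
  have vv: "v \<bullet> v = 1" using v(2) by (simp add: norm_eq_1)
  have key: "w \<bullet> (A *v v) = 0" if w: "w \<in> S" "v \<bullet> w = 0" for w
  proof (rule quad_nonpos_zero[where d = "w \<bullet> (A *v w) - l * (w \<bullet> w)"])
    fix t :: real
    define y where "y = v + t *\<^sub>R w"
    have yS: "y \<in> S" unfolding y_def using S v w by (simp add: subspace_add subspace_scale)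
    have yy: "y \<bullet> y = 1 + t^2 * (w \<bullet> w)"
      unfolding y_def using vv w(2) by (simp add: inner_add inner_commute power2_eq_square algebra_simps)
    have ypos: "y \<bullet> y > 0" using yy by (simp add: add_pos_nonneg)
    hence ny: "norm y > 0" by (simp add: norm_eq_sqrt_inner)
    define z where "z = (1 / norm y) *\<^sub>R y"
    have zS: "z \<in> S" unfolding z_def using S yS by (simp add: subspace_scale)
    have nz: "norm z = 1" unfolding z_def using ny by simp
    have "z \<bullet> (A *v z) \<le> l" using mx[OF zS nz] unfolding l_def .
    moreover have "z \<bullet> (A *v z) = (y \<bullet> (A *v y)) / (y \<bullet> y)"
      unfolding z_def using ny
      by (simp add: matrix_vector_mult_scaleR inner_scaleR_left inner_scaleR_right
            power2_norm_eq_inner[symmetric] power2_eq_square)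
    ultimately have "y \<bullet> (A *v y) \<le> l * (y \<bullet> y)" using ypos by (simp add: divide_le_eq)
    moreover have "y \<bullet> (A *v y) = l + 2 * t * (w \<bullet> (A *v v)) + t^2 * (w \<bullet> (A *v w))"
    proof -
      have "(A *v v) \<bullet> w = w \<bullet> (A *v v)" by (simp add: inner_commute)
      have s: "v \<bullet> (A *v w) = w \<bullet> (A *v v)" using sym_inner[OF sym, of v w] by (simp add: inner_commute)
      show ?thesis unfolding y_def l_def
        by (simp add: matrix_vector_right_distrib matrix_vector_mult_scaleR inner_add inner_scaleR_left
              inner_scaleR_right s power2_eq_square algebra_simps)
    qed
    ultimately show "2 * t * (w \<bullet> (A *v v)) + t^2 * (w \<bullet> (A *v w) - l * (w \<bullet> w)) \<le> 0"
      unfolding yy by (simp add: algebra_simps)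
  qed
  define w where "w = A *v v - l *\<^sub>R v"
  have wS: "w \<in> S" unfolding w_def using S v inv by (simp add: subspace_diff subspace_scale)
  have vw: "v \<bullet> w = 0" unfolding w_def l_def using vv by (simp add: inner_diff_right)
  have "w \<bullet> (A *v v) = 0" by (rule key[OF wS vw])
  hence "w \<bullet> w = 0" unfolding w_def using vw[unfolded w_def]
    by (simp add: inner_diff_left inner_diff_right inner_commute)
  hence "w = 0" by simp
  thus ?thesis unfolding w_def l_def by simp
qed

lemma eigen_basis_aux:
  fixes A :: "real^'n^'n"
  assumes sym: "transpose A = A"
  shows "subspace S \<Longrightarrow> dim S = k \<Longrightarrow> (\<forall>x\<in>S. A *v x \<in> S) \<Longrightarrow>
    \<exists>B. B \<subseteq> S \<and> finite B \<and> card B = k \<and> pairwise orthogonal B \<and>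
        (\<forall>b\<in>B. norm b = 1 \<and> A *v b = (b \<bullet> (A *v b)) *\<^sub>R b)"
proof (induction k arbitrary: S)
  case 0
  then show ?case by (intro exI[of _ "{}"]) auto
next
  case (Suc k)
  note S = Suc.prems(1) and dS = Suc.prems(2) and inv = Suc.prems(3)
  have "\<not> S \<subseteq> {0}" using dS dim_eq_0[of S] by simp
  then obtain x where x: "x \<in> S" "x \<noteq> 0" by blast
  define T where "T = S \<inter> sphere 0 1"
  have cT: "compact T" unfolding T_def
    using closed_subspace[OF S] compact_sphere by (simp add: closed_Int_compact)
  have xT: "(1 / norm x) *\<^sub>R x \<in> T" unfolding T_def using x S by (simp add: subspace_scale)
  have "continuous_on T (\<lambda>y. y \<bullet> (A *v y))"
    by (intro continuous_intros)
  then obtain v where vT: "v \<in> T" and mx: "\<And>y. y \<in> T \<Longrightarrow> y \<bullet> (A *v y) \<le> v \<bullet> (A *v v)"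
    using continuous_attains_sup[OF cT] xT by blast
  have vS: "v \<in> S" and nv: "norm v = 1" using vT unfolding T_def by auto
  have ev: "A *v v = (v \<bullet> (A *v v)) *\<^sub>R v"
    by (rule rayleigh_eig[OF sym S vS nv]) (use inv mx in \<open>auto simp: T_def\<close>)
  define S' where "S' = {y \<in> S. \<forall>z \<in> span {v}. orthogonal z y}"
  have sS: "subspace (span {v})" by simp
  have "span {v} \<subseteq> S" using vS S by (simp add: span_minimal)
  from dim_subspace_orthogonal_to_vectors[OF sS S this]
  have "dim S' + dim (span {v}) = dim S" unfolding S'_def .
  moreover have "dim (span {v}) = 1" using nv by auto
  ultimately have dS': "dim S' = k" using dS by simp
  have S'alt: "S' = {y \<in> S. v \<bullet> y = 0}"
    unfolding S'_def by (auto simp: span_singleton orthogonal_def)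
  have "S' = S \<inter> {x. v \<bullet> x = 0}" unfolding S'alt by auto
  hence subS': "subspace S'" using subspace_inter[OF S subspace_hyperplane[of v]] by simp
  have invS': "\<forall>y\<in>S'. A *v y \<in> S'"
  proof
    fix y assume "y \<in> S'"
    hence yS: "y \<in> S" and vy: "v \<bullet> y = 0" unfolding S'alt by auto
    have "v \<bullet> (A *v y) = (A *v v) \<bullet> y" by (rule sym_inner[OF sym])
    also have "\<dots> = 0" by (subst ev) (simp add: vy)
    finally show "A *v y \<in> S'" unfolding S'alt using inv yS by auto
  qed
  obtain B where B: "B \<subseteq> S'" "finite B" "card B = k" "pairwise orthogonal B"
      "\<forall>b\<in>B. norm b = 1 \<and> A *v b = (b \<bullet> (A *v b)) *\<^sub>R b"
    using Suc.IH[OF subS' dS' invS'] by blast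
  have vB: "v \<notin> B"
  proof
    assume "v \<in> B" hence "v \<bullet> v = 0" using B(1) unfolding S'alt by auto
    thus False using nv by simp
  qed
  show ?case
  proof (intro exI[of _ "insert v B"] conjI)
    show "insert v B \<subseteq> S" using B(1) vS unfolding S'alt by auto
    show "finite (insert v B)" using B(2) by simp
    show "card (insert v B) = Suc k" using B(2,3) vB by simp
    show "pairwise orthogonal (insert v B)"
      using B(1,4) unfolding S'alt pairwise_insert
      by (auto simp: orthogonal_def inner_commute)
    show "\<forall>b\<in>insert v B. norm b = 1 \<and> A *v b = (b \<bullet> (A *v b)) *\<^sub>R b"
      using B(5) nv ev by auto
  qed
qed

lemma eigen_basis:
  fixes A :: "real^'n^'n"
  assumes sym: "transpose A = A"
  obtains B where "finite B" "card B = CARD('n)" "pairwise orthogonal B"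
      "\<And>b. b \<in> B \<Longrightarrow> norm b = 1" "\<And>b. b \<in> B \<Longrightarrow> A *v b = (b \<bullet> (A *v b)) *\<^sub>R b"
  using eigen_basis_aux[OF sym, of UNIV "CARD('n)"] by (auto simp: dim_UNIV)


lemma XtX_inner:
  fixes X :: "real^'n^'m"
  shows "(X *v a) \<bullet> (X *v b) = a \<bullet> ((transpose X ** X) *v b)"
proof -
  have "a \<bullet> ((transpose X ** X) *v b) = a \<bullet> (transpose X *v (X *v b))"
    by (simp add: matrix_vector_mul_assoc)
  also have "\<dots> = (a v* transpose X) \<bullet> (X *v b)" by (rule dot_lmul_matrix[symmetric])
  also have "a v* transpose X = X *v a"
    by (metis transpose_matrix_vector transpose_transpose)
  finally show ?thesis by simp
qed

lemma svd_exists: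
  fixes X :: "real^'n^'m"
  shows "\<exists>U S V. is_svd X U S V"
proof -
  define A where "A = transpose X ** X"
  have symA: "transpose A = A" unfolding A_def by (simp add: matrix_transpose_mul)
  obtain Bv where Bv: "finite Bv" "card Bv = CARD('n)" "pairwise orthogonal Bv"
      "\<And>b. b \<in> Bv \<Longrightarrow> norm b = 1" "\<And>b. b \<in> Bv \<Longrightarrow> A *v b = (b \<bullet> (A *v b)) *\<^sub>R b"
    using eigen_basis[OF symA] by blast
  obtain \<nu> where \<nu>: "bij_betw \<nu> (UNIV::'n set) Bv"
    using finite_same_card_bij[of "UNIV::'n set" Bv] Bv(1,2) by auto
  have \<nu>in: "\<nu> j \<in> Bv" for j using \<nu> by (auto simp: bij_betw_def)
  have \<nu>inj: "\<nu> j = \<nu> j' \<Longrightarrow> j = j'" for j j' using \<nu> by (auto simp: bij_betw_def inj_on_def)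
  have \<nu>n: "norm (\<nu> j) = 1" for j using Bv(4) \<nu>in by blast
  have \<nu>orth: "j \<noteq> j' \<Longrightarrow> \<nu> j \<bullet> \<nu> j' = 0" for j j'
    using Bv(3) \<nu>in \<nu>inj unfolding pairwise_def orthogonal_def by metis
  define w where "w j = X *v \<nu> j" for j
  have worth: "j \<noteq> j' \<Longrightarrow> w j \<bullet> w j' = 0" for j j'
  proof -
    assume jj: "j \<noteq> j'"
    have "w j \<bullet> w j' = \<nu> j \<bullet> (A *v \<nu> j')" unfolding w_def A_def by (rule XtX_inner)
    also have "\<dots> = 0" by (subst Bv(5)[OF \<nu>in]) (simp add: \<nu>orth[OF jj])
    finally show ?thesis .
  qed
  define Np where "Np = {j. w j \<noteq> 0}"
  define c where "c j = (1 / norm (w j)) *\<^sub>R w j" for j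
  have cn: "j \<in> Np \<Longrightarrow> norm (c j) = 1" for j unfolding c_def Np_def by simp
  have corth: "j \<noteq> j' \<Longrightarrow> c j \<bullet> c j' = 0" for j j'
    unfolding c_def using worth by simp
  have cinj: "j \<in> Np \<Longrightarrow> j' \<in> Np \<Longrightarrow> c j = c j' \<Longrightarrow> j = j'" for j j'
  proof (rule ccontr)
    assume "j \<in> Np" "j' \<in> Np" "c j = c j'" "j \<noteq> j'"
    hence "c j \<bullet> c j = 0" using corth by metis
    thus False using cn[OF \<open>j \<in> Np\<close>] by simp
  qed
  define C0 where "C0 = c ` Np"
  have fC0: "finite C0" unfolding C0_def by simp
  have C0orth: "pairwise orthogonal C0" unfolding C0_def pairwise_def orthogonal_def
    using corth by (metis imageE)
  have C0n: "x \<in> C0 \<Longrightarrow> norm x = 1" for x unfolding C0_def using cn by auto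
  have indC0: "independent C0"
    using pairwise_orthogonal_independent[OF C0orth] C0n by fastforce
  define W where "W = {y \<in> UNIV. \<forall>x \<in> span C0. orthogonal x y}"
  have subW: "subspace W" unfolding W_def using subspace_orthogonal_to_vectors by simp
  have "dim W + dim (span C0) = dim (UNIV :: (real^'m) set)"
    unfolding W_def by (rule dim_subspace_orthogonal_to_vectors) auto
  hence dW: "dim W + card C0 = CARD('m)"
    using dim_span indC0 dim_eq_card_independent[OF indC0] by (simp add: dim_UNIV)
  obtain C1 where C1: "C1 \<subseteq> W" "pairwise orthogonal C1" "\<And>x. x \<in> C1 \<Longrightarrow> norm x = 1"
      "independent C1" "card C1 = dim W"
    using orthonormal_basis_subspace[OF subW] by metis
  have fC1: "finite C1" using C1(4) finiteI_independent by blast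
  have dis: "C0 \<inter> C1 = {}"
  proof (rule ccontr)
    assume "C0 \<inter> C1 \<noteq> {}"
    then obtain x where "x \<in> C0" "x \<in> C1" by blast
    hence "orthogonal x x" using C1(1) span_base unfolding W_def by blast
    thus False using C0n[OF \<open>x \<in> C0\<close>] by (simp add: orthogonal_def)
  qed
  define Cm where "Cm = C0 \<union> C1"
  have cCm: "card Cm = CARD('m)" unfolding Cm_def using card_Un_disjoint[OF fC0 fC1 dis] dW C1(5)
    by simp
  have Cmn: "x \<in> Cm \<Longrightarrow> norm x = 1" for x unfolding Cm_def using C0n C1(3) by auto
  have cross: "x \<in> C0 \<Longrightarrow> y \<in> C1 \<Longrightarrow> orthogonal x y" for x y
    using C1(1) span_base unfolding W_def by blast
  have Cmorth: "pairwise orthogonal Cm" unfolding Cm_def pairwise_def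
    using C0orth C1(2) cross unfolding pairwise_def by (metis Un_iff orthogonal_commute)
  obtain \<mu> where \<mu>: "bij_betw \<mu> (UNIV::'m set) Cm"
    using finite_same_card_bij[of "UNIV::'m set" Cm] cCm fC0 fC1 Cm_def by auto
  have \<mu>in: "\<mu> i \<in> Cm" for i using \<mu> by (auto simp: bij_betw_def)
  have \<mu>inj: "\<mu> i = \<mu> i' \<Longrightarrow> i = i'" for i i' using \<mu> by (auto simp: bij_betw_def inj_on_def)
  define \<pi> where "\<pi> j = inv_into UNIV \<mu> (c j)" for j
  have \<mu>\<pi>: "j \<in> Np \<Longrightarrow> \<mu> (\<pi> j) = c j" for j
    unfolding \<pi>_def using \<mu> bij_betw_inv_into_right[OF \<mu>] unfolding Cm_def C0_def by blast
  define S :: "real^'n^'m" where "S = (\<chi> i j. if j \<in> Np \<and> i = \<pi> j then norm (w j) else 0)"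
  define U :: "real^'m^'m" where "U = (\<chi> a b. \<mu> b $ a)"
  define V :: "real^'n^'n" where "V = (\<chi> a b. \<nu> b $ a)"
  have colU: "column i U = \<mu> i" for i unfolding U_def column_def by (simp add: vec_eq_iff)
  have oU: "orthogonal_matrix U"
    unfolding orthogonal_matrix_orthonormal_columns colU
  proof (intro conjI allI impI)
    show "norm (\<mu> i) = 1" for i using Cmn[OF \<mu>in] .
    show "orthogonal (\<mu> i) (\<mu> j)" if "i \<noteq> j" for i j
    proof -
      have "\<mu> i \<noteq> \<mu> j" using \<mu>inj that by blast
      thus ?thesis using Cmorth \<mu>in[of i] \<mu>in[of j] unfolding pairwise_def by blast
    qed
  qed
  have oV: "orthogonal_matrix V"
    unfolding orthogonal_matrix_orthonormal_columns V_def column_def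
    using \<nu>n \<nu>orth by (auto simp: orthogonal_def)
  have XV: "X ** V = U ** S"
  proof -
    have "(X ** V) $ a $ j = (U ** S) $ a $ j" for a j
    proof -
      have l: "(X ** V) $ a $ j = w j $ a"
        unfolding w_def V_def by (simp add: matrix_matrix_mult_def matrix_vector_mult_def)
      have "(U ** S) $ a $ j = (\<Sum>i\<in>UNIV. \<mu> i $ a * (if j \<in> Np \<and> i = \<pi> j then norm (w j) else 0))"
        unfolding U_def S_def by (simp add: matrix_matrix_mult_def)
      also have "\<dots> = (if j \<in> Np then \<mu> (\<pi> j) $ a * norm (w j) else 0)"
        by (cases "j \<in> Np") (simp_all add: if_distrib cong: if_cong)
      also have "\<dots> = w j $ a"
        using \<mu>\<pi>[of j] unfolding c_def Np_def by auto
      finally show ?thesis using l by simp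
    qed
    thus ?thesis by (simp add: vec_eq_iff)
  qed
  have "X = X ** (V ** transpose V)" using oV by (simp add: orthogonal_matrix_def)
  also have "\<dots> = U ** S ** transpose V" by (simp add: matrix_mul_assoc XV)
  finally have dec: "X = U ** S ** transpose V" .
  have "is_svd X U S V"
    unfolding is_svd_def
  proof (intro conjI oU oV dec allI impI)
    show "S $ i $ j \<ge> 0" for i j unfolding S_def by simp
    show "j = j'" if "S $ i $ j \<noteq> 0" "S $ i $ j' \<noteq> 0" for i j j'
    proof -
      have "j \<in> Np" "i = \<pi> j" "j' \<in> Np" "i = \<pi> j'" using that unfolding S_def by (auto split: if_splits)
      thus ?thesis using \<mu>\<pi> cinj by metis
    qed
    show "i = i'" if "S $ i $ j \<noteq> 0" "S $ i' $ j \<noteq> 0" for i i' j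
      using that unfolding S_def by (auto split: if_splits)
  qed
  thus ?thesis by blast
qed


lemma inner_mat_sum:
  fixes A B :: "real^'n^'m"
  shows "A \<bullet> B = (\<Sum>i\<in>UNIV. \<Sum>j\<in>UNIV. A$i$j * B$i$j)"
  by (simp add: inner_vec_def)

lemma inner_mm_right:
  fixes Q :: "real^'n^'m" and A :: "real^'k^'m" and B :: "real^'n^'k"
  shows "Q \<bullet> (A ** B) = (transpose A ** Q) \<bullet> B"
proof -
  have "Q \<bullet> (A ** B) = (\<Sum>i\<in>UNIV. \<Sum>j\<in>UNIV. \<Sum>k\<in>UNIV. Q$i$j * A$i$k * B$k$j)"
    by (simp add: inner_mat_sum matrix_matrix_mult_def sum_distrib_left mult_ac)
  also have "\<dots> = (\<Sum>i\<in>UNIV. \<Sum>k\<in>UNIV. \<Sum>j\<in>UNIV. Q$i$j * A$i$k * B$k$j)"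
    by (rule sum.cong[OF refl], rule sum.swap)
  also have "\<dots> = (\<Sum>k\<in>UNIV. \<Sum>i\<in>UNIV. \<Sum>j\<in>UNIV. Q$i$j * A$i$k * B$k$j)"
    by (rule sum.swap)
  also have "\<dots> = (\<Sum>k\<in>UNIV. \<Sum>j\<in>UNIV. \<Sum>i\<in>UNIV. Q$i$j * A$i$k * B$k$j)"
    by (rule sum.cong[OF refl], rule sum.swap)
  also have "\<dots> = (transpose A ** Q) \<bullet> B"
    unfolding inner_mat_sum matrix_matrix_mult_def transpose_def
    by (simp add: sum_distrib_right sum_distrib_left, simp add: mult_ac)
  finally show ?thesis .
qed

lemma inner_mm_left:
  fixes Q :: "real^'n^'m" and A :: "real^'k^'m" and B :: "real^'n^'k"
  shows "Q \<bullet> (A ** B) = (Q ** transpose B) \<bullet> A"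
proof -
  have "Q \<bullet> (A ** B) = (\<Sum>i\<in>UNIV. \<Sum>j\<in>UNIV. \<Sum>k\<in>UNIV. Q$i$j * A$i$k * B$k$j)"
    by (simp add: inner_mat_sum matrix_matrix_mult_def sum_distrib_left mult_ac)
  also have "\<dots> = (\<Sum>i\<in>UNIV. \<Sum>k\<in>UNIV. \<Sum>j\<in>UNIV. Q$i$j * A$i$k * B$k$j)"
    by (rule sum.cong[OF refl], rule sum.swap)
  also have "\<dots> = (Q ** transpose B) \<bullet> A"
    unfolding inner_mat_sum matrix_matrix_mult_def transpose_def
    by (simp add: sum_distrib_right sum_distrib_left, simp add: mult_ac)
  finally show ?thesis .
qed

lemma orth_norm:
  fixes U :: "real^'m^'m"
  assumes "orthogonal_matrix U"
  shows "norm (U *v x) = norm x"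
proof -
  have "(U *v x) \<bullet> (U *v x) = x \<bullet> x"
    using XtX_inner[of U x x] assms by (simp add: orthogonal_matrix_def)
  thus ?thesis by (simp add: norm_eq_sqrt_inner)
qed

definition contr :: "(real^'n^'m) set" where
  "contr = {Q. \<forall>v. norm (Q *v v) \<le> norm v}"

lemma svd_entry_le:
  fixes U :: "real^'m^'m" and V :: "real^'n^'n" and Q :: "real^'n^'m"
  assumes "orthogonal_matrix U" "orthogonal_matrix V" "Q \<in> contr"
  shows "\<bar>(transpose U ** (Q ** V)) $ i $ j\<bar> \<le> 1"
proof -
  have e: "(transpose U ** (Q ** V)) $ i $ j = column i U \<bullet> (Q *v column j V)"
    by (simp add: matrix_matrix_mult_def column_def matrix_vector_mult_def inner_vec_def transpose_def)
  have "\<bar>column i U \<bullet> (Q *v column j V)\<bar> \<le> norm (column i U) * norm (Q *v column j V)"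
    by (rule Cauchy_Schwarz_ineq2)
  also have "\<dots> \<le> 1 * norm (column j V)"
  proof -
    have "norm (Q *v column j V) \<le> norm (column j V)" using assms(3) unfolding contr_def by blast
    thus ?thesis using assms(1) unfolding orthogonal_matrix_orthonormal_columns by simp
  qed
  also have "\<dots> = 1" using assms(2) unfolding orthogonal_matrix_orthonormal_columns by simp
  finally show ?thesis using e by simp
qed

lemma svd_trace:
  fixes U :: "real^'m^'m" and V :: "real^'n^'n" and Q S :: "real^'n^'m"
  shows "Q \<bullet> (U ** S ** transpose V) = (transpose U ** (Q ** V)) \<bullet> S"
proof -
  have "Q \<bullet> ((U ** S) ** transpose V) = (Q ** transpose (transpose V)) \<bullet> (U ** S)"
    by (rule inner_mm_left)
  also have "\<dots> = (transpose U ** (Q ** V)) \<bullet> S" by (simp add: inner_mm_right)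
  finally show ?thesis .
qed

lemma is_svd_parts:
  assumes "is_svd X U S V"
  shows "orthogonal_matrix U" "orthogonal_matrix V" "\<And>i j. S$i$j \<ge> 0"
    "\<And>i j j'. S$i$j \<noteq> 0 \<Longrightarrow> S$i$j' \<noteq> 0 \<Longrightarrow> j = j'"
    "\<And>i i' j. S$i$j \<noteq> 0 \<Longrightarrow> S$i'$j \<noteq> 0 \<Longrightarrow> i = i'"
    "X = U ** S ** transpose V"
proof -
  note d = assms[unfolded is_svd_def]
  show "orthogonal_matrix U" using conjunct1[OF d] .
  show "orthogonal_matrix V" using conjunct1[OF conjunct2[OF d]] .
  show "\<And>i j. S$i$j \<ge> 0" using conjunct1[OF conjunct2[OF conjunct2[OF d]]] by blast
  show "\<And>i j j'. S$i$j \<noteq> 0 \<Longrightarrow> S$i$j' \<noteq> 0 \<Longrightarrow> j = j'"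
    using conjunct1[OF conjunct2[OF conjunct2[OF conjunct2[OF d]]]] by blast
  show "\<And>i i' j. S$i$j \<noteq> 0 \<Longrightarrow> S$i'$j \<noteq> 0 \<Longrightarrow> i = i'"
    using conjunct1[OF conjunct2[OF conjunct2[OF conjunct2[OF conjunct2[OF d]]]]] by blast
  show "X = U ** S ** transpose V"
    using conjunct2[OF conjunct2[OF conjunct2[OF conjunct2[OF conjunct2[OF d]]]]] .
qed

lemma nuc_upper:
  assumes "is_svd X U S V" "Q \<in> contr"
  shows "Q \<bullet> X \<le> (\<Sum>i\<in>UNIV. \<Sum>j\<in>UNIV. S$i$j)"
proof -
  note d = is_svd_parts[OF assms(1)]
  have "Q \<bullet> X = (transpose U ** (Q ** V)) \<bullet> S" unfolding d(6) by (rule svd_trace)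
  also have "\<dots> = (\<Sum>i\<in>UNIV. \<Sum>j\<in>UNIV. (transpose U ** (Q ** V))$i$j * S$i$j)" by (rule inner_mat_sum)
  also have "\<dots> \<le> (\<Sum>i\<in>UNIV. \<Sum>j\<in>UNIV. S$i$j)"
  proof (intro sum_mono)
    fix i j
    have "\<bar>(transpose U ** (Q ** V))$i$j\<bar> \<le> 1" by (rule svd_entry_le[OF d(1) d(2) assms(2)])
    moreover have "S$i$j \<ge> 0" by (rule d(3))
    ultimately show "(transpose U ** (Q ** V))$i$j * S$i$j \<le> S$i$j"
      using mult_right_mono[OF abs_le_D1[of "(transpose U ** (Q ** V))$i$j" 1]] by simp
  qed
  finally show ?thesis .
qed

lemma partial_perm_norm:
  fixes S :: "real^'n^'m" and y :: "real^'n"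
  assumes row: "\<And>i j j'. S$i$j \<noteq> 0 \<Longrightarrow> S$i$j' \<noteq> 0 \<Longrightarrow> j = j'"
    and col: "\<And>i i' j. S$i$j \<noteq> 0 \<Longrightarrow> S$i'$j \<noteq> 0 \<Longrightarrow> i = i'"
  shows "norm ((\<chi> i j. if S$i$j \<noteq> 0 then 1 else 0) *v y) \<le> norm y"
proof -
  define P :: "real^'n^'m" where "P = (\<chi> i j. if S$i$j \<noteq> 0 then 1 else 0)"
  define D where "D = {i. \<exists>j. S$i$j \<noteq> 0}"
  define \<sigma> where "\<sigma> i = (SOME j. S$i$j \<noteq> 0)" for i
  have s\<sigma>: "i \<in> D \<Longrightarrow> S$i$(\<sigma> i) \<noteq> 0" for i unfolding D_def \<sigma>_def by (metis (mono_tags) mem_Collect_eq someI)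
  have Py: "(P *v y)$i = (if i \<in> D then y$(\<sigma> i) else 0)" for i
  proof (cases "i \<in> D")
    case True
    have "(P *v y)$i = (\<Sum>j\<in>UNIV. (if j = \<sigma> i then y$j else 0))"
      unfolding P_def matrix_vector_mult_def vec_lambda_beta
    proof (intro sum.cong refl)
      fix j
      show "(if S $ i $ j \<noteq> 0 then 1 else 0) * y $ j = (if j = \<sigma> i then y $ j else 0)"
        using row[of i j "\<sigma> i"] s\<sigma>[OF True] by (cases "j = \<sigma> i") auto
    qed
    also have "\<dots> = y$(\<sigma> i)" by simp
    finally show ?thesis using True by simp
  next
    case False
    thus ?thesis unfolding P_def matrix_vector_mult_def D_def by auto
  qed
  have inj: "inj_on \<sigma> D" unfolding inj_on_def using s\<sigma> col by metis
  have "(P *v y) \<bullet> (P *v y) = (\<Sum>i\<in>UNIV. (if i \<in> D then y$(\<sigma> i) * y$(\<sigma> i) else 0))"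
    unfolding inner_vec_def by (auto simp: Py intro!: sum.cong)
  also have "\<dots> = (\<Sum>i\<in>D. y$(\<sigma> i) * y$(\<sigma> i))"
    by (simp add: sum.If_cases)
  also have "\<dots> = (\<Sum>j\<in>\<sigma> ` D. y$j * y$j)" by (simp add: sum.reindex[OF inj])
  also have "\<dots> \<le> (\<Sum>j\<in>UNIV. y$j * y$j)" by (rule sum_mono2) auto
  also have "\<dots> = y \<bullet> y" by (simp add: inner_vec_def)
  finally show ?thesis unfolding P_def[symmetric] by (simp add: norm_le)
qed

lemma nuc_attain:
  fixes X :: "real^'n^'m"
  assumes "is_svd X U S V"
  shows "\<exists>Q \<in> contr. Q \<bullet> X = (\<Sum>i\<in>UNIV. \<Sum>j\<in>UNIV. S$i$j)"
proof -
  note d = is_svd_parts[OF assms(1)]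
  define P :: "real^'n^'m" where "P = (\<chi> i j. if S$i$j \<noteq> 0 then 1 else 0)"
  define Q where "Q = U ** P ** transpose V"
  have oU: "orthogonal_matrix U" and oV: "orthogonal_matrix V" using d(1,2) .
  have "Q \<bullet> X = (transpose U ** (Q ** V)) \<bullet> S" unfolding d(6) by (rule svd_trace)
  also have "transpose U ** (Q ** V) = P"
  proof -
    have "transpose U ** (Q ** V) = (transpose U ** U) ** P ** (transpose V ** V)"
      unfolding Q_def by (simp add: matrix_mul_assoc)
    thus ?thesis using oU oV by (simp add: orthogonal_matrix_def)
  qed
  also have "P \<bullet> S = (\<Sum>i\<in>UNIV. \<Sum>j\<in>UNIV. S$i$j)"
    unfolding inner_mat_sum P_def by (auto intro!: sum.cong)
  finally have 1: "Q \<bullet> X = (\<Sum>i\<in>UNIV. \<Sum>j\<in>UNIV. S$i$j)" .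
  have "Q \<in> contr" unfolding contr_def
  proof (intro CollectI allI)
    fix v
    have "Q *v v = U *v (P *v (transpose V *v v))" unfolding Q_def by (simp only: matrix_vector_mul_assoc matrix_mul_assoc)
    hence "norm (Q *v v) = norm (P *v (transpose V *v v))" using orth_norm[OF oU] by simp
    also have "\<dots> \<le> norm (transpose V *v v)" unfolding P_def
      by (rule partial_perm_norm[OF d(4) d(5)])
    also have "\<dots> = norm v" using orth_norm oV orthogonal_matrix_transpose by blast
    finally show "norm (Q *v v) \<le> norm v" .
  qed
  with 1 show ?thesis by blast
qed

lemma nuc_char:
  fixes X :: "real^'n^'m"
  shows "(\<forall>Q \<in> contr. Q \<bullet> X \<le> nuc_norm X) \<and> (\<exists>Q \<in> contr. Q \<bullet> X = nuc_norm X)"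
proof -
  have "\<exists>s. \<exists>U S V. is_svd X U S V \<and> s = (\<Sum>i\<in>UNIV. \<Sum>j\<in>UNIV. S$i$j)"
    using svd_exists[of X] by blast
  hence "\<exists>U S V. is_svd X U S V \<and> nuc_norm X = (\<Sum>i\<in>UNIV. \<Sum>j\<in>UNIV. S$i$j)"
    unfolding nuc_norm_def by (rule someI_ex)
  then obtain U S V where "is_svd X U S V" "nuc_norm X = (\<Sum>i\<in>UNIV. \<Sum>j\<in>UNIV. S$i$j)" by blast
  thus ?thesis using nuc_upper nuc_attain by metis
qed

lemma nuc_ge: "Q \<in> contr \<Longrightarrow> Q \<bullet> X \<le> nuc_norm X"
  using nuc_char by blast

lemma nuc_eq: obtains Q where "Q \<in> contr" "nuc_norm X = Q \<bullet> X"
  using nuc_char by metis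

lemma nuc_convex: "convex_on UNIV nuc_norm"
proof (rule convex_onI)
  fix t :: real and x y :: "real^'n^'m"
  assume t: "0 < t" "t < 1"
  obtain Q where Q: "Q \<in> contr" "nuc_norm ((1 - t) *\<^sub>R x + t *\<^sub>R y) = Q \<bullet> ((1 - t) *\<^sub>R x + t *\<^sub>R y)"
    by (rule nuc_eq)
  have "Q \<bullet> ((1 - t) *\<^sub>R x + t *\<^sub>R y) = (1 - t) * (Q \<bullet> x) + t * (Q \<bullet> y)"
    by (simp add: inner_add_right)
  also have "\<dots> \<le> (1 - t) * nuc_norm x + t * nuc_norm y"
    using t nuc_ge[OF Q(1)] by (intro add_mono mult_left_mono) auto
  finally show "nuc_norm ((1 - t) *\<^sub>R x + t *\<^sub>R y) \<le> (1 - t) * nuc_norm x + t * nuc_norm y"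
    using Q(2) by simp
qed (rule convex_UNIV)

lemma nuc_nonneg: "nuc_norm X \<ge> 0"
proof -
  have "0 \<in> contr" unfolding contr_def by simp
  from nuc_ge[OF this, of X] show ?thesis by simp
qed

lemma nuc_cont: "continuous_on UNIV nuc_norm"
  by (rule convex_on_continuous) (auto intro: nuc_convex simp: convex_UNIV)


lemma min_exists:
  fixes \<phi> :: "'a::euclidean_space \<Rightarrow> real"
  assumes c: "continuous_on UNIV \<phi>" and b: "bounded {x. \<phi> x \<le> \<phi> a}"
  shows "\<exists>x. \<forall>y. \<phi> x \<le> \<phi> y"
proof -
  let ?S = "{x. \<phi> x \<le> \<phi> a}"
  have "closed ?S" by (rule closed_Collect_le[OF c continuous_on_const])
  hence cS: "compact ?S" using b by (simp add: compact_eq_bounded_closed)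
  have "?S \<noteq> {}" by auto
  then obtain x where x: "x \<in> ?S" "\<forall>y\<in>?S. \<phi> x \<le> \<phi> y"
    using continuous_attains_inf[OF cS _ continuous_on_subset[OF c]] by blast
  have "\<phi> x \<le> \<phi> y" for y
  proof (cases "y \<in> ?S")
    case True thus ?thesis using x by blast
  next
    case False thus ?thesis using x by auto
  qed
  thus ?thesis by blast
qed

lemma min_subgrad_gen:
  fixes f q :: "'a::real_vector \<Rightarrow> real"
  assumes cf: "convex_on UNIV f" and mn: "\<And>y. f x + q x \<le> f y + q y"
    and qb: "\<And>t. 0 < t \<Longrightarrow> t < 1 \<Longrightarrow> q (x + t *\<^sub>R (z - x)) \<le> q x + t * L + t^2 * M"
  shows "f x - L \<le> f z"
proof (rule ccontr)
  assume "\<not> f x - L \<le> f z"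
  hence d: "f x - L - f z > 0" by simp
  define t where "t = min (1/2) ((f x - L - f z) / (2 * (\<bar>M\<bar> + 1)))"
  have t0: "0 < t" "t < 1" unfolding t_def using d by auto
  have eq: "x + t *\<^sub>R (z - x) = (1 - t) *\<^sub>R x + t *\<^sub>R z" by (simp add: algebra_simps)
  have cv: "f (x + t *\<^sub>R (z - x)) \<le> (1 - t) * f x + t * f z"
    unfolding eq using convex_onD[OF cf, of t x z] t0 by simp
  have "f x + q x \<le> f (x + t *\<^sub>R (z - x)) + q (x + t *\<^sub>R (z - x))" by (rule mn)
  also have "\<dots> \<le> (1 - t) * f x + t * f z + (q x + t * L + t^2 * M)" using cv qb[OF t0] by linarith
  finally have "t * f x \<le> t * f z + t * L + t^2 * M" by (simp add: algebra_simps)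
  hence "t * (f x) \<le> t * (f z + L + t * M)" by (simp add: algebra_simps power2_eq_square)
  hence le: "f x \<le> f z + L + t * M" using t0 by simp
  have "t * M \<le> t * \<bar>M\<bar>" using t0 by (simp add: mult_left_mono)
  also have "t * \<bar>M\<bar> < f x - L - f z"
  proof -
    have "t \<le> (f x - L - f z) / (2 * (\<bar>M\<bar> + 1))" unfolding t_def by simp
    hence "t * \<bar>M\<bar> \<le> (f x - L - f z) / (2 * (\<bar>M\<bar> + 1)) * \<bar>M\<bar>"
      by (rule mult_right_mono) simp
    also have "\<dots> < f x - L - f z"
    proof -
      have "\<bar>M\<bar> / (2 * (\<bar>M\<bar> + 1)) < 1" by (simp add: field_simps)
      hence "(f x - L - f z) * (\<bar>M\<bar> / (2 * (\<bar>M\<bar> + 1))) < (f x - L - f z) * 1"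
        using d by (intro mult_strict_left_mono) auto
      thus ?thesis by (simp add: field_simps)
    qed
    finally show ?thesis .
  qed
  finally show False using le by linarith
qed

lemma k_conv_by_bound:
  fixes s :: "nat \<Rightarrow> 'a::real_normed_vector"
  assumes "\<And>k. norm (s k - L) \<le> b k" "b \<longlonglongrightarrow> 0"
  shows "s \<longlonglongrightarrow> L"
proof -
  have "(\<lambda>k. s k - L) \<longlonglongrightarrow> 0"
    by (rule Lim_null_comparison[OF _ assms(2)]) (use assms(1) in auto)
  thus ?thesis by (rule LIM_zero_cancel)
qed

lemma k_cont_lim:
  fixes h :: "'a::metric_space \<Rightarrow> real"
  assumes "continuous_on UNIV h" "s \<longlonglongrightarrow> l"
  shows "(\<lambda>k. h (s k)) \<longlonglongrightarrow> h l"
proof -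
  have "isCont h l" using assms(1) by (simp add: continuous_on_eq_continuous_at)
  thus ?thesis using assms(2) by (rule isCont_tendsto_compose)
qed

lemma kkt_exists:
  fixes f g :: "'a::euclidean_space \<Rightarrow> real" and J :: "'b::euclidean_space \<Rightarrow> 'a"
    and P :: "'a \<Rightarrow> 'a" and G :: "'a \<Rightarrow> 'b" and B :: 'a
  assumes linJ: "linear J" and linP: "linear P" and linG: "linear G"
    and PJ: "\<And>v. P (J v) = J v"
    and Pin: "\<And>a b. P a \<bullet> b = P a \<bullet> P b"
    and Pdef: "\<And>a. P a = J (G a)"
    and cvf: "convex_on UNIV f" and cvg: "convex_on UNIV g"
    and contf: "continuous_on UNIV f" and contg: "continuous_on UNIV g"
    and cf: "cf > 0" and fco: "\<And>X. cf * norm X \<le> f X"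
    and cg: "cg > 0" and gco: "\<And>E. cg * norm E \<le> g E"
    and gsb: "\<And>E Y. (\<And>Z. g E + Y \<bullet> (Z - E) \<le> g Z) \<Longrightarrow> norm Y \<le> Lg"
  shows "\<exists>Xb db Eb Yb. (\<forall>Z. f Xb + Yb \<bullet> (Z - Xb) \<le> f Z) \<and> (\<forall>Z. g Eb + Yb \<bullet> (Z - Eb) \<le> g Z)
           \<and> (\<forall>v. Yb \<bullet> J v = 0) \<and> B + J db - Xb - Eb = 0"
proof -
  define Q where "Q a = a - P a" for a
  have Pdiff: "P (a - b) = P a - P b" for a b using linP by (simp add: linear_diff)
  have Pscale: "P (c *\<^sub>R a) = c *\<^sub>R P a" for c a using linP by (simp add: linear_scale)
  have Qdiff: "Q (a - b) = Q a - Q b" for a b unfolding Q_def Pdiff by simp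
  have Qscale: "Q (c *\<^sub>R a) = c *\<^sub>R Q a" for c a unfolding Q_def Pscale by (simp add: algebra_simps)
  have Pin2: "a \<bullet> P b = P a \<bullet> P b" for a b using Pin[of b a] by (simp add: inner_commute)
  have Qorth: "Q w \<bullet> P d = 0" for w d unfolding Q_def using Pin2[of w d] by (simp add: inner_diff_left)
  have QJ: "Q w \<bullet> J v = 0" for w v using Qorth[of w "J v"] PJ by simp
  have QQ: "Q w \<bullet> Q d = Q w \<bullet> d" for w d using Qorth[of w d] unfolding Q_def[of d] by (simp add: inner_diff_right)
  have QS: "d \<bullet> Q w = Q d \<bullet> w" for w d using QQ[of w d] QQ[of d w] by (simp add: inner_commute)
  have Q0: "Q 0 = 0" using Qdiff[of 0 0] by simp
  have blQ: "bounded_linear Q"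
  proof -
    have Padd: "P (a + b) = P a + P b" for a b using linP by (simp add: linear_add)
    have "linear Q" unfolding linear_iff Q_def using Padd Pscale by (simp add: algebra_simps)
    thus ?thesis by (simp add: linear_conv_bounded_linear)
  qed
  have fnn: "f X \<ge> 0" for X using fco[of X] cf by (smt (verit) mult_nonneg_nonneg norm_ge_zero)
  have gnn: "g E \<ge> 0" for E using gco[of E] cg by (smt (verit) mult_nonneg_nonneg norm_ge_zero)
  define \<rho> where "\<rho> n = real n + 1" for n
  have \<rho>pos: "\<rho> n > 0" for n unfolding \<rho>_def by simp
  define \<Phi> where "\<Phi> n z = f (fst z) + g (snd z) + (\<rho> n / 2) * (Q (B - fst z - snd z) \<bullet> Q (B - fst z - snd z))"
    for n and z :: "'a \<times> 'a"
  define c where "c = f B + g 0"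
  have \<Phi>B: "\<Phi> n (B, 0) = c" for n unfolding \<Phi>_def c_def by (simp add: Q0)
  have \<Phi>lb: "f (fst z) \<le> \<Phi> n z" "g (snd z) \<le> \<Phi> n z" for n z
  proof -
    have "(\<rho> n / 2) * (Q (B - fst z - snd z) \<bullet> Q (B - fst z - snd z)) \<ge> 0"
      using \<rho>pos[of n] by simp
    thus "f (fst z) \<le> \<Phi> n z" "g (snd z) \<le> \<Phi> n z" unfolding \<Phi>_def using fnn gnn by (smt (verit))+
  qed
  have ex: "\<exists>z. \<forall>y. \<Phi> n z \<le> \<Phi> n y" for n
  proof (rule min_exists[where a="(B, 0)"])
    show "continuous_on UNIV (\<Phi> n)" unfolding \<Phi>_def
      by (intro continuous_intros continuous_on_compose2[OF contf] continuous_on_compose2[OF contg]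
            bounded_linear.continuous_on[OF blQ]) auto
    show "bounded {x. \<Phi> n x \<le> \<Phi> n (B, 0)}" unfolding bounded_iff
    proof (intro exI ballI)
      fix z assume "z \<in> {x. \<Phi> n x \<le> \<Phi> n (B, 0)}"
      hence zc: "\<Phi> n z \<le> c" using \<Phi>B by simp
      have "cf * norm (fst z) \<le> c" using fco \<Phi>lb zc by (meson order_trans)
      hence a: "norm (fst z) \<le> c / cf" using cf by (simp add: field_simps)
      have "cg * norm (snd z) \<le> c" using gco \<Phi>lb zc by (meson order_trans)
      hence b: "norm (snd z) \<le> c / cg" using cg by (simp add: field_simps)
      have "norm z \<le> norm (fst z) + norm (snd z)" using norm_Pair_le[of "fst z" "snd z"] by simp
      thus "norm z \<le> c / cf + c / cg" using a b by linarith
    qed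
  qed
  then obtain z where z: "\<And>n y. \<Phi> n (z n) \<le> \<Phi> n y" by metis
  define Xn where "Xn n = fst (z n)" for n
  define En where "En n = snd (z n)" for n
  define w where "w n = B - Xn n - En n" for n
  define Yn where "Yn n = \<rho> n *\<^sub>R Q (w n)" for n
  have fsub: "f (Xn n) + Yn n \<bullet> (Z - Xn n) \<le> f Z" for n Z
  proof -
    define q where "q X = g (En n) + (\<rho> n / 2) * (Q (B - X - En n) \<bullet> Q (B - X - En n))" for X
    define d where "d = Z - Xn n"
    have "f (Xn n) - (- (Yn n \<bullet> d)) \<le> f Z"
    proof (rule min_subgrad_gen[OF cvf, where q = q and M = "(\<rho> n / 2) * (Q d \<bullet> Q d)"])
      show "f (Xn n) + q (Xn n) \<le> f y + q y" for y
        using z[of n "(y, En n)"] unfolding \<Phi>_def q_def Xn_def En_def by simp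
      fix t :: real
      have e: "Q (B - (Xn n + t *\<^sub>R (Z - Xn n)) - En n) = Q (w n) - t *\<^sub>R Q d"
        unfolding w_def d_def by (simp add: Qdiff[symmetric] Qscale[symmetric] algebra_simps)
      have "q (Xn n + t *\<^sub>R (Z - Xn n)) = q (Xn n) + t * (- (Yn n \<bullet> d)) + t^2 * ((\<rho> n / 2) * (Q d \<bullet> Q d))"
        unfolding q_def e unfolding w_def[symmetric] Yn_def
        using QS[of "w n" d] by (simp add: inner_diff_left inner_diff_right QQ inner_commute power2_eq_square algebra_simps)
      thus "q (Xn n + t *\<^sub>R (Z - Xn n)) \<le> q (Xn n) + t * (- (Yn n \<bullet> d)) + t^2 * ((\<rho> n / 2) * (Q d \<bullet> Q d))"
        by simp
    qed
    thus ?thesis unfolding d_def by simp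
  qed
  have gsub: "g (En n) + Yn n \<bullet> (Z - En n) \<le> g Z" for n Z
  proof -
    define q where "q E = f (Xn n) + (\<rho> n / 2) * (Q (B - Xn n - E) \<bullet> Q (B - Xn n - E))" for E
    define d where "d = Z - En n"
    have "g (En n) - (- (Yn n \<bullet> d)) \<le> g Z"
    proof (rule min_subgrad_gen[OF cvg, where q = q and M = "(\<rho> n / 2) * (Q d \<bullet> Q d)"])
      show "g (En n) + q (En n) \<le> g y + q y" for y
        using z[of n "(Xn n, y)"] unfolding \<Phi>_def q_def Xn_def En_def by simp
      fix t :: real
      have e: "Q (B - Xn n - (En n + t *\<^sub>R (Z - En n))) = Q (w n) - t *\<^sub>R Q d"
        unfolding w_def d_def by (simp add: Qdiff[symmetric] Qscale[symmetric] algebra_simps)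
      have "q (En n + t *\<^sub>R (Z - En n)) = q (En n) + t * (- (Yn n \<bullet> d)) + t^2 * ((\<rho> n / 2) * (Q d \<bullet> Q d))"
        unfolding q_def e unfolding w_def[symmetric] Yn_def
        using QS[of "w n" d] by (simp add: inner_diff_left inner_diff_right QQ inner_commute power2_eq_square algebra_simps)
      thus "q (En n + t *\<^sub>R (Z - En n)) \<le> q (En n) + t * (- (Yn n \<bullet> d)) + t^2 * ((\<rho> n / 2) * (Q d \<bullet> Q d))"
        by simp
    qed
    thus ?thesis unfolding d_def by simp
  qed
  have YJ: "Yn n \<bullet> J v = 0" for n v unfolding Yn_def using QJ by simp
  have Ybd: "norm (Yn n) \<le> Lg" for n using gsb gsub by blast
  have Xbd: "norm (Xn n) \<le> c / cf" for n
  proof -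
    have a: "f (Xn n) \<le> c" using \<Phi>lb(1)[where n=n and z="z n"] z[of n "(B,0)"] \<Phi>B[of n] unfolding Xn_def by linarith
    have "cf * norm (Xn n) \<le> c" using fco[of "Xn n"] a by linarith
    thus ?thesis using cf by (simp add: field_simps)
  qed
  have Ebd: "norm (En n) \<le> c / cg" for n
  proof -
    have a: "g (En n) \<le> c" using \<Phi>lb(2)[where n=n and z="z n"] z[of n "(B,0)"] \<Phi>B[of n] unfolding En_def by linarith
    have "cg * norm (En n) \<le> c" using gco[of "En n"] a by linarith
    thus ?thesis using cg by (simp add: field_simps)
  qed
  have Qw0: "(\<lambda>n. Q (w n)) \<longlonglongrightarrow> 0"
  proof (rule k_conv_by_bound)
    fix n
    have "Q (w n) = (1 / \<rho> n) *\<^sub>R Yn n" unfolding Yn_def using \<rho>pos[of n] by simp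
    hence "norm (Q (w n)) = norm (Yn n) / \<rho> n" using \<rho>pos[of n] by simp
    also have "\<dots> \<le> \<bar>Lg\<bar> / \<rho> n"
    proof (rule divide_right_mono)
      show "norm (Yn n) \<le> \<bar>Lg\<bar>" using Ybd[of n] by linarith
    qed (use \<rho>pos[of n] in auto)
    also have "\<dots> = \<bar>Lg\<bar> * inverse (real (Suc n))" unfolding \<rho>_def by (simp add: divide_inverse)
    finally show "norm (Q (w n) - 0) \<le> \<bar>Lg\<bar> * inverse (real (Suc n))" by simp
    show "(\<lambda>n. \<bar>Lg\<bar> * inverse (real (Suc n))) \<longlonglongrightarrow> 0"
      using tendsto_mult_right_zero[OF LIMSEQ_inverse_real_of_nat] by simp
  qed
  define T where "T n = (Xn n, En n, Yn n)" for n
  have "bounded (range T)" unfolding bounded_iff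
  proof (intro exI ballI)
    fix x assume "x \<in> range T"
    then obtain n where xn: "x = T n" by blast
    have "norm x \<le> norm (Xn n) + (norm (En n) + norm (Yn n))"
      unfolding xn T_def by (meson add_left_mono norm_Pair_le order_trans)
    thus "norm x \<le> c / cf + (c / cg + Lg)" using Xbd[of n] Ebd[of n] Ybd[of n] by linarith
  qed
  then obtain l \<phi> where \<phi>: "strict_mono \<phi>" and lim: "(T \<circ> \<phi>) \<longlonglongrightarrow> l"
    using bounded_imp_convergent_subsequence by blast
  obtain Xl El Yl where l: "l = (Xl, El, Yl)" by (cases l) auto
  have Xs: "(\<lambda>k. Xn (\<phi> k)) \<longlonglongrightarrow> Xl" using tendsto_fst[OF lim] unfolding l T_def o_def by simp
  have Es: "(\<lambda>k. En (\<phi> k)) \<longlonglongrightarrow> El" using tendsto_fst[OF tendsto_snd[OF lim]] unfolding l T_def o_def by simp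
  have Ys: "(\<lambda>k. Yn (\<phi> k)) \<longlonglongrightarrow> Yl" using tendsto_snd[OF tendsto_snd[OF lim]] unfolding l T_def o_def by simp
  have kf: "f Xl + Yl \<bullet> (Z - Xl) \<le> f Z" for Z
  proof -
    have "(\<lambda>k. f (Xn (\<phi> k)) + Yn (\<phi> k) \<bullet> (Z - Xn (\<phi> k))) \<longlonglongrightarrow> f Xl + Yl \<bullet> (Z - Xl)"
      by (intro tendsto_intros k_cont_lim[OF contf Xs] Ys Xs)
    thus ?thesis by (rule LIMSEQ_le_const2) (use fsub in blast)
  qed
  have kg: "g El + Yl \<bullet> (Z - El) \<le> g Z" for Z
  proof -
    have "(\<lambda>k. g (En (\<phi> k)) + Yn (\<phi> k) \<bullet> (Z - En (\<phi> k))) \<longlonglongrightarrow> g El + Yl \<bullet> (Z - El)"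
      by (intro tendsto_intros k_cont_lim[OF contg Es] Ys Es)
    thus ?thesis by (rule LIMSEQ_le_const2) (use gsub in blast)
  qed
  have kJ: "Yl \<bullet> J v = 0" for v
  proof -
    have "(\<lambda>k. Yn (\<phi> k) \<bullet> J v) \<longlonglongrightarrow> Yl \<bullet> J v" by (intro tendsto_intros Ys)
    moreover have "(\<lambda>k. Yn (\<phi> k) \<bullet> J v) = (\<lambda>k. 0)" using YJ by simp
    ultimately show ?thesis using LIMSEQ_unique tendsto_const by metis
  qed
  have Qz: "Q (B - Xl - El) = 0"
  proof -
    have "(\<lambda>k. Q (w (\<phi> k))) \<longlonglongrightarrow> Q (B - Xl - El)"
      unfolding w_def by (intro bounded_linear.tendsto[OF blQ] tendsto_intros Xs Es)
    moreover have "(\<lambda>k. Q (w (\<phi> k))) \<longlonglongrightarrow> 0" using LIMSEQ_subseq_LIMSEQ[OF Qw0 \<phi>] by (simp add: o_def)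
    ultimately show ?thesis using LIMSEQ_unique by blast
  qed
  define db where "db = G (Xl + El - B)"
  have "B + J db - Xl - El = Q (B - Xl - El)"
  proof -
    have "J db = P (Xl + El - B)" unfolding db_def Pdef ..
    also have "\<dots> = - P (B - Xl - El)"
    proof -
      have e: "Xl + El - B = - (B - Xl - El)" by simp
      show ?thesis unfolding e by (rule linear_neg[OF linP])
    qed
    finally show ?thesis unfolding Q_def by simp
  qed
  hence "B + J db - Xl - El = 0" using Qz by simp
  thus ?thesis using kf kg kJ by blast
qed


lemma entry_le_norm:
  fixes E :: "real^'n^'m"
  shows "\<bar>E$i$j\<bar> \<le> norm E"
proof -
  have "\<bar>E$i$j\<bar> \<le> norm (E$i)" by (metis component_le_norm_cart real_norm_def)
  also have "\<dots> \<le> norm E" by (rule Finite_Cartesian_Product.norm_nth_le)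
  finally show ?thesis .
qed

lemma l1_nonneg: "l1_norm E \<ge> 0"
  unfolding l1_norm_def by (intro sum_nonneg) auto

lemma l1_le_norm:
  fixes E :: "real^'n^'m"
  shows "l1_norm E \<le> real (CARD('m) * CARD('n)) * norm E"
proof -
  have "l1_norm E \<le> (\<Sum>i\<in>(UNIV::'m set). \<Sum>j\<in>(UNIV::'n set). norm E)"
    unfolding l1_norm_def by (intro sum_mono entry_le_norm)
  thus ?thesis by simp
qed

lemma entry_le_l1:
  fixes E :: "real^'n^'m"
  shows "\<bar>E$i$j\<bar> \<le> l1_norm E"
proof -
  have "\<bar>E$i$j\<bar> \<le> (\<Sum>j\<in>UNIV. \<bar>E$i$j\<bar>)" by (rule member_le_sum) auto
  also have "\<dots> \<le> l1_norm E" unfolding l1_norm_def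
    by (rule member_le_sum[of i UNIV "\<lambda>i. \<Sum>j\<in>UNIV. \<bar>E$i$j\<bar>"]) (auto intro: sum_nonneg)
  finally show ?thesis .
qed

lemma norm_le_l1:
  fixes E :: "real^'n^'m"
  shows "norm E \<le> l1_norm E"
proof -
  have "E \<bullet> E = (\<Sum>i\<in>UNIV. \<Sum>j\<in>UNIV. E$i$j * E$i$j)" by (rule inner_mat_sum)
  also have "\<dots> \<le> (\<Sum>i\<in>UNIV. \<Sum>j\<in>UNIV. \<bar>E$i$j\<bar> * l1_norm E)"
  proof (intro sum_mono)
    fix i j
    have "E$i$j * E$i$j \<le> \<bar>E$i$j\<bar> * \<bar>E$i$j\<bar>" by (simp add: abs_mult[symmetric])
    also have "\<dots> \<le> \<bar>E$i$j\<bar> * l1_norm E" by (intro mult_left_mono entry_le_l1) auto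
    finally show "E$i$j * E$i$j \<le> \<bar>E$i$j\<bar> * l1_norm E" .
  qed
  also have "\<dots> = l1_norm E * l1_norm E" unfolding l1_norm_def by (simp add: sum_distrib_right)
  finally have "E \<bullet> E \<le> l1_norm E * l1_norm E" .
  hence "(norm E)^2 \<le> (l1_norm E)^2" by (simp add: dot_square_norm power2_eq_square)
  thus ?thesis using l1_nonneg by (rule power2_le_imp_le)
qed

lemma l1_add: "l1_norm (A + B) \<le> l1_norm A + l1_norm B"
  unfolding l1_norm_def by (simp add: sum.distrib[symmetric] sum_mono abs_triangle_ineq)

lemma l1_scale: "l1_norm (c *\<^sub>R A) = \<bar>c\<bar> * l1_norm A"
  unfolding l1_norm_def by (simp add: abs_mult sum_distrib_left)

lemma l1_convex: "convex_on UNIV (\<lambda>E. lam * l1_norm E)" if "lam \<ge> 0" for lam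
proof (rule convex_onI)
  fix t :: real and x y :: "real^'n^'m"
  assume t: "0 < t" "t < 1"
  have "l1_norm ((1 - t) *\<^sub>R x + t *\<^sub>R y) \<le> l1_norm ((1 - t) *\<^sub>R x) + l1_norm (t *\<^sub>R y)"
    by (rule l1_add)
  also have "\<dots> = (1 - t) * l1_norm x + t * l1_norm y" using t by (simp add: l1_scale)
  finally have h: "l1_norm ((1 - t) *\<^sub>R x + t *\<^sub>R y) \<le> (1 - t) * l1_norm x + t * l1_norm y" .
  have "lam * l1_norm ((1 - t) *\<^sub>R x + t *\<^sub>R y) \<le> lam * ((1 - t) * l1_norm x + t * l1_norm y)"
    by (rule mult_left_mono[OF h that])
  also have "lam * ((1 - t) * l1_norm x + t * l1_norm y) = (1 - t) * (lam * l1_norm x) + t * (lam * l1_norm y)"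
    by (simp add: algebra_simps)
  finally show "lam * l1_norm ((1 - t) *\<^sub>R x + t *\<^sub>R y) \<le> (1 - t) * (lam * l1_norm x) + t * (lam * l1_norm y)" .
qed (rule convex_UNIV)

lemma l1_cont: "lam \<ge> 0 \<Longrightarrow> continuous_on UNIV (\<lambda>E::real^'n^'m. lam * l1_norm E)"
  by (rule convex_on_continuous) (auto intro: l1_convex simp: convex_UNIV)

lemma soft_scalar:
  fixes lam \<sigma> w z :: real
  assumes lam: "lam > 0" and sig: "\<sigma> > 0"
  defines "e \<equiv> sgn w * max (\<bar>w\<bar> - lam / \<sigma>) 0"
  shows "lam * \<bar>z\<bar> \<ge> lam * \<bar>e\<bar> + \<sigma> * (w - e) * (z - e)"
proof -
  have sm: "\<sigma> * (lam / \<sigma>) = lam" using sig by simp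
  consider (p) "w > lam / \<sigma>" | (n) "w < - (lam / \<sigma>)" | (z) "\<bar>w\<bar> \<le> lam / \<sigma>" by linarith
  thus ?thesis
  proof cases
    case p
    hence pos: "w > 0" using lam sig by (smt (verit) divide_pos_pos)
    hence e: "e = w - lam / \<sigma>" unfolding e_def using p by simp
    have "\<sigma> * (w - e) = lam" unfolding e using sm by simp
    hence "lam * \<bar>e\<bar> + \<sigma> * (w - e) * (z - e) = lam * z" unfolding e using p by (simp add: algebra_simps)
    also have "\<dots> \<le> lam * \<bar>z\<bar>" using lam by (simp add: mult_left_mono)
    finally show ?thesis .
  next
    case n
    hence neg: "w < 0" using lam sig by (smt (verit) divide_pos_pos)
    hence e: "e = w + lam / \<sigma>" unfolding e_def using n by simp
    have "\<sigma> * (w - e) = - lam" unfolding e using sm by simp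
    hence "lam * \<bar>e\<bar> + \<sigma> * (w - e) * (z - e) = lam * (- z)" unfolding e using n by (simp add: algebra_simps)
    also have "\<dots> \<le> lam * \<bar>z\<bar>" using lam by (intro mult_left_mono) auto
    finally show ?thesis .
  next
    case z
    hence e: "e = 0" unfolding e_def by simp
    have "\<sigma> * w * z \<le> \<sigma> * \<bar>w\<bar> * \<bar>z\<bar>" using sig by (simp add: abs_mult[symmetric] mult.assoc mult_left_mono)
    also have "\<dots> \<le> \<sigma> * (lam / \<sigma>) * \<bar>z\<bar>" using z sig by (intro mult_right_mono mult_left_mono) auto
    finally show ?thesis unfolding e using sm by simp
  qed
qed

lemma soft_sub:
  fixes W Z :: "real^'n^'m"
  assumes lam: "lam > 0" and sig: "\<sigma> > 0"
  shows "lam * l1_norm Z \<ge> lam * l1_norm (soft (lam / \<sigma>) W) + (\<sigma> *\<^sub>R (W - soft (lam / \<sigma>) W)) \<bullet> (Z - soft (lam / \<sigma>) W)"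
proof -
  let ?S = "soft (lam / \<sigma>) W"
  have a: "lam * l1_norm ?S = (\<Sum>i\<in>UNIV. \<Sum>j\<in>UNIV. lam * \<bar>?S$i$j\<bar>)"
    unfolding l1_norm_def by (simp add: sum_distrib_left)
  have b: "(\<sigma> *\<^sub>R (W - ?S)) \<bullet> (Z - ?S) = (\<Sum>i\<in>UNIV. \<Sum>j\<in>UNIV. \<sigma> * (W$i$j - ?S$i$j) * (Z$i$j - ?S$i$j))"
    unfolding inner_mat_sum by (simp add: mult.assoc)
  have "lam * l1_norm ?S + (\<sigma> *\<^sub>R (W - ?S)) \<bullet> (Z - ?S)
      = (\<Sum>i\<in>UNIV. \<Sum>j\<in>UNIV. lam * \<bar>?S$i$j\<bar> + \<sigma> * (W$i$j - ?S$i$j) * (Z$i$j - ?S$i$j))"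
    unfolding a b by (simp only: sum.distrib)
  also have "\<dots> \<le> (\<Sum>i\<in>UNIV. \<Sum>j\<in>UNIV. lam * \<bar>Z$i$j\<bar>)"
    unfolding soft_def vec_lambda_beta by (intro sum_mono soft_scalar lam sig)
  also have "\<dots> = lam * l1_norm Z" unfolding l1_norm_def by (simp add: sum_distrib_left)
  finally show ?thesis .
qed

lemma l1_subgrad_bnd:
  fixes E Y :: "real^'n^'m"
  assumes lam: "lam > 0" and h: "\<And>Z. lam * l1_norm E + Y \<bullet> (Z - E) \<le> lam * l1_norm Z"
  shows "norm Y \<le> lam * real (CARD('m) * CARD('n))"
proof -
  let ?C = "real (CARD('m) * CARD('n))"
  have "lam * l1_norm E + Y \<bullet> Y \<le> lam * l1_norm (E + Y)" using h[of "E + Y"] by simp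
  also have "\<dots> \<le> lam * (l1_norm E + ?C * norm Y)"
    using l1_add[of E Y] l1_le_norm[of Y] lam by (intro mult_left_mono) auto
  finally have "norm Y * norm Y \<le> (lam * ?C) * norm Y"
    by (simp add: algebra_simps power2_norm_eq_inner[symmetric] power2_eq_square)
  thus ?thesis using lam by (cases "norm Y = 0") (auto simp: mult_le_cancel_right)
qed

lemma nuc_coercive:
  fixes X :: "real^'n^'m"
  shows "norm X \<le> real (CARD('m) * CARD('n)) * nuc_norm X"
proof (cases "X = 0")
  case True thus ?thesis using nuc_nonneg[of X] by simp
next
  case False
  let ?C = "real (CARD('m) * CARD('n))"
  define L where "L = l1_norm X"
  have nX: "norm X > 0" using False by simp
  have Lp: "L > 0" unfolding L_def using norm_le_l1[of X] nX by linarith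
  define Q where "Q = (1 / L) *\<^sub>R X"
  have "Q \<in> contr" unfolding contr_def
  proof (intro CollectI allI)
    fix v
    have "norm (X *v v) \<le> onorm ((*v) X) * norm v"
      by (rule onorm[OF matrix_vector_mul_bounded_linear])
    also have "\<dots> \<le> L * norm v" unfolding L_def l1_norm_def
      by (intro mult_right_mono onorm_le_matrix_component_sum) auto
    finally have "norm (X *v v) \<le> L * norm v" .
    moreover have "Q *v v = (1 / L) *\<^sub>R (X *v v)" unfolding Q_def by (simp add: scaleR_matrix_vector_assoc)
    ultimately show "norm (Q *v v) \<le> norm v" using Lp by (simp add: field_simps)
  qed
  hence "Q \<bullet> X \<le> nuc_norm X" by (rule nuc_ge)
  moreover have "Q \<bullet> X = (norm X)^2 / L" unfolding Q_def by (simp add: power2_norm_eq_inner)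
  ultimately have "(norm X)^2 \<le> L * nuc_norm X" using Lp by (simp add: field_simps)
  also have "\<dots> \<le> (?C * norm X) * nuc_norm X"
    unfolding L_def using l1_le_norm[of X] nuc_nonneg[of X] by (intro mult_right_mono) auto
  finally have "norm X * norm X \<le> norm X * (?C * nuc_norm X)" by (simp add: power2_eq_square algebra_simps)
  thus ?thesis using nX by simp
qed

lemma svt_min:
  fixes W :: "real^'n^'m"
  assumes mu: "\<mu> > 0"
  shows "\<forall>Z. nuc_norm (svt \<mu> W) + (1 / (2*\<mu>)) * (norm (svt \<mu> W - W))\<^sup>2
              \<le> nuc_norm Z + (1 / (2*\<mu>)) * (norm (Z - W))\<^sup>2"
proof -
  define \<phi> where "\<phi> Y = nuc_norm Y + (1 / (2*\<mu>)) * (norm (Y - W))\<^sup>2" for Y :: "real^'n^'m"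
  have c: "continuous_on UNIV \<phi>" unfolding \<phi>_def
    by (intro continuous_intros nuc_cont)
  have b: "bounded {x. \<phi> x \<le> \<phi> W}" unfolding bounded_iff
  proof (intro exI ballI)
    fix Y assume "Y \<in> {x. \<phi> x \<le> \<phi> W}"
    hence "\<phi> Y \<le> nuc_norm W" unfolding \<phi>_def by simp
    hence "(1 / (2*\<mu>)) * (norm (Y - W))\<^sup>2 \<le> nuc_norm W" unfolding \<phi>_def using nuc_nonneg[of Y] by linarith
    hence "(norm (Y - W))\<^sup>2 \<le> 2 * \<mu> * nuc_norm W" using mu by (simp add: field_simps)
    hence "norm (Y - W) \<le> sqrt (2 * \<mu> * nuc_norm W)" by (simp add: real_le_rsqrt)
    thus "norm Y \<le> norm W + sqrt (2 * \<mu> * nuc_norm W)" using norm_triangle_sub[of Y W] by linarith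
  qed
  obtain Y0 where Y0: "\<And>y. \<phi> Y0 \<le> \<phi> y" using min_exists[OF c b] by blast
  have uniq: "Y1 = Y0" if Y1: "\<And>y. \<phi> Y1 \<le> \<phi> y" for Y1
  proof -
    define M where "M = (1/2) *\<^sub>R (Y0 + Y1)"
    have e0: "\<phi> Y0 = \<phi> Y1" using Y0[of Y1] Y1[of Y0] by simp
    have nc: "nuc_norm M \<le> (1/2) * nuc_norm Y0 + (1/2) * nuc_norm Y1"
      using convex_onD[OF nuc_convex, of "1/2" Y0 Y1] unfolding M_def by (simp add: scaleR_right_distrib)
    have par: "(norm (M - W))\<^sup>2 = (1/2) * (norm (Y0 - W))\<^sup>2 + (1/2) * (norm (Y1 - W))\<^sup>2 - (1/4) * (norm (Y0 - Y1))\<^sup>2"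
      unfolding M_def power2_norm_eq_inner
      by (simp add: inner_diff_left inner_diff_right inner_add_left inner_add_right inner_commute algebra_simps)
    have "\<phi> M \<le> \<phi> Y0 - (1 / (2*\<mu>)) * ((1/4) * (norm (Y0 - Y1))\<^sup>2)"
      using nc e0 unfolding \<phi>_def par by (simp add: algebra_simps)
    moreover have "\<phi> Y0 \<le> \<phi> M" by (rule Y0)
    ultimately have "(1 / (2*\<mu>)) * ((1/4) * (norm (Y0 - Y1))\<^sup>2) \<le> 0" by linarith
    hence "(norm (Y0 - Y1))\<^sup>2 \<le> 0" using mu by (auto simp: mult_le_0_iff divide_le_0_iff)
    thus ?thesis by simp
  qed
  have ex1: "\<exists>!Y. \<forall>Z. \<phi> Y \<le> \<phi> Z" using Y0 uniq by blast
  have "\<forall>Z. \<phi> (THE Y. \<forall>Z. \<phi> Y \<le> \<phi> Z) \<le> \<phi> Z" by (rule theI'[OF ex1])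
  thus ?thesis unfolding svt_def \<phi>_def .
qed

lemma svt_sub:
  fixes W Z :: "real^'n^'m"
  assumes sig: "\<sigma> > 0"
  shows "nuc_norm Z \<ge> nuc_norm (svt (1/\<sigma>) W) + (\<sigma> *\<^sub>R (W - svt (1/\<sigma>) W)) \<bullet> (Z - svt (1/\<sigma>) W)"
proof -
  let ?x = "svt (1/\<sigma>) W"
  define q where "q Y = (\<sigma> / 2) * ((Y - W) \<bullet> (Y - W))" for Y :: "real^'n^'m"
  define d where "d = Z - ?x"
  have h: "1 / (2 * (1 / \<sigma>)) = \<sigma> / 2" by simp
  have "nuc_norm ?x - (\<sigma> * ((?x - W) \<bullet> d)) \<le> nuc_norm Z"
  proof (rule min_subgrad_gen[OF nuc_convex, where q = q and M = "(\<sigma> / 2) * (d \<bullet> d)"])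
    show "nuc_norm ?x + q ?x \<le> nuc_norm y + q y" for y
      using svt_min[of "1/\<sigma>" W] sig unfolding q_def h by (simp add: power2_norm_eq_inner)
    fix t :: real
    have "q (?x + t *\<^sub>R (Z - ?x)) = q ?x + t * (\<sigma> * ((?x - W) \<bullet> d)) + t^2 * ((\<sigma> / 2) * (d \<bullet> d))"
      unfolding q_def d_def[symmetric]
      by (simp add: inner_diff_left inner_diff_right inner_add_left inner_add_right inner_commute
            power2_eq_square algebra_simps)
    thus "q (?x + t *\<^sub>R (Z - ?x)) \<le> q ?x + t * (\<sigma> * ((?x - W) \<bullet> d)) + t^2 * ((\<sigma> / 2) * (d \<bullet> d))" by simp
  qed
  moreover have "(\<sigma> *\<^sub>R (W - ?x)) \<bullet> d = - (\<sigma> * ((?x - W) \<bullet> d))"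
    by (simp add: inner_diff_left algebra_simps)
  ultimately show ?thesis unfolding d_def by simp
qed


lemma young_inner:
  fixes x y :: "'a::real_inner"
  assumes t: "t > 0"
  shows "2 * \<bar>x \<bullet> y\<bar> \<le> t * (x \<bullet> x) + (y \<bullet> y) / t"
proof -
  have h: "2 * t * (x \<bullet> y) \<le> t^2 * (x \<bullet> x) + y \<bullet> y" "- (2 * t * (x \<bullet> y)) \<le> t^2 * (x \<bullet> x) + y \<bullet> y"
  proof -
    have "0 \<le> (t *\<^sub>R x - y) \<bullet> (t *\<^sub>R x - y)" by simp
    thus "2 * t * (x \<bullet> y) \<le> t^2 * (x \<bullet> x) + y \<bullet> y"
      by (simp add: inner_diff_left inner_diff_right power2_eq_square inner_commute algebra_simps)
    have "0 \<le> (t *\<^sub>R x + y) \<bullet> (t *\<^sub>R x + y)" by simp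
    thus "- (2 * t * (x \<bullet> y)) \<le> t^2 * (x \<bullet> x) + y \<bullet> y"
      by (simp add: inner_add_left inner_add_right power2_eq_square inner_commute algebra_simps)
  qed
  have "2 * t * \<bar>x \<bullet> y\<bar> \<le> t^2 * (x \<bullet> x) + y \<bullet> y"
    using h by (cases "x \<bullet> y \<ge> 0") (auto simp: abs_if)
  hence "t * (2 * \<bar>x \<bullet> y\<bar>) \<le> t * (t * (x \<bullet> x) + (y \<bullet> y) / t)"
    using t by (simp add: algebra_simps power2_eq_square)
  thus ?thesis using t by simp
qed

lemma golden:
  fixes \<xi> :: real
  assumes "0 < \<xi>" "\<xi> < (1 + sqrt 5) / 2"
  shows "\<xi>^2 - \<xi> - 1 < 0"
proof -
  have s5: "sqrt 5 * sqrt 5 = 5" by simp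
  have s1: "sqrt 5 > 1" by simp
  have "\<xi>^2 - \<xi> - 1 = (\<xi> - (1 + sqrt 5) / 2) * (\<xi> - (1 - sqrt 5) / 2)"
    using s5 by (simp add: field_simps power2_eq_square)
  moreover have "\<xi> - (1 + sqrt 5) / 2 < 0" using assms by simp
  moreover have "\<xi> - (1 - sqrt 5) / 2 > 0"
  proof -
    have "(1 - sqrt 5) / 2 < 0" using s1 by simp
    thus ?thesis using assms by linarith
  qed
  ultimately show ?thesis by (simp add: mult_neg_pos)
qed

lemma arith1:
  fixes P1 P2 R1 R2 W1 H0 H1 WR Q \<sigma> \<xi> c1 a :: real
  assumes pd: "P1 - P2 \<ge> (2-\<xi>)*\<sigma>*R2 + \<sigma>*W1 + \<sigma>*H1 - 2*\<sigma>*WR"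
    and main: "-2*\<sigma>*WR \<ge> \<sigma>*H1 - \<sigma>*H0 - Q"
    and e: "Q = c1*\<sigma>*R1 + a*\<sigma>*W1"
  shows "(P1 + c1*\<sigma>*R1 + \<sigma>*H0) - (P2 + c1*\<sigma>*R2 + \<sigma>*H1) \<ge> (2-\<xi>-c1)*\<sigma>*R2 + (1-a)*\<sigma>*W1 + \<sigma>*H1"
  using assms by (simp add: algebra_simps)

lemma nn_tendsto_zero:
  fixes x :: "nat \<Rightarrow> 'a::real_inner"
  assumes "(\<lambda>k. x k \<bullet> x k) \<longlonglongrightarrow> 0"
  shows "x \<longlonglongrightarrow> 0"
proof -
  have "(\<lambda>k. sqrt (x k \<bullet> x k)) \<longlonglongrightarrow> sqrt 0" by (intro tendsto_real_sqrt assms)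
  hence "(\<lambda>k. norm (x k)) \<longlonglongrightarrow> 0" by (simp add: norm_eq_sqrt_inner)
  thus ?thesis by (simp add: tendsto_norm_zero_iff)
qed

lemma sandwich0:
  fixes a b :: "nat \<Rightarrow> real"
  assumes "\<And>k. 0 \<le> a k" "\<And>k. a k \<le> b k" "b \<longlonglongrightarrow> 0"
  shows "a \<longlonglongrightarrow> 0"
proof -
  have e1: "eventually (\<lambda>k. (\<lambda>_. 0) k \<le> a k) sequentially" using assms(1) by simp
  have e2: "eventually (\<lambda>k. a k \<le> b k) sequentially" using assms(2) by simp
  show ?thesis by (rule tendsto_sandwich[OF e1 e2 tendsto_const assms(3)])
qed

lemma conv_by_bound:
  fixes s :: "nat \<Rightarrow> 'a::real_normed_vector"
  assumes "\<And>k. norm (s k - L) \<le> b k" "b \<longlonglongrightarrow> 0"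
  shows "s \<longlonglongrightarrow> L"
proof -
  have "(\<lambda>k. s k - L) \<longlonglongrightarrow> 0"
    by (rule Lim_null_comparison[OF _ assms(2)]) (use assms(1) in auto)
  thus ?thesis by (rule LIM_zero_cancel)
qed

lemma shift2:
  assumes "(\<lambda>k. s (Suc (Suc k))) \<longlonglongrightarrow> L" shows "s \<longlonglongrightarrow> L"
proof -
  have "(\<lambda>n. s (Suc n)) \<longlonglongrightarrow> L" by (rule LIMSEQ_imp_Suc) (use assms in simp)
  thus ?thesis by (rule LIMSEQ_imp_Suc)
qed

lemma mono_sub_zero:
  fixes V :: "nat \<Rightarrow> real"
  assumes "\<And>k. V (Suc k) \<le> V k" "\<And>k. V k \<ge> 0" "strict_mono \<phi>" "(V \<circ> \<phi>) \<longlonglongrightarrow> 0"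
  shows "V \<longlonglongrightarrow> 0"
proof -
  have d: "decseq V" using assms(1) by (simp add: decseq_Suc_iff)
  have nn: "\<forall>i. 0 \<le> V i" using assms(2) by simp
  obtain L where L: "V \<longlonglongrightarrow> L" by (rule decseq_convergent[OF d nn])
  have "(V \<circ> \<phi>) \<longlonglongrightarrow> L" by (rule LIMSEQ_subseq_LIMSEQ[OF L assms(3)])
  hence "L = 0" using assms(4) LIMSEQ_unique by blast
  thus ?thesis using L by simp
qed

locale admm =
  fixes f g :: "'a::euclidean_space \<Rightarrow> real" and J :: "'b::euclidean_space \<Rightarrow> 'a"
    and P :: "'a \<Rightarrow> 'a" and G :: "'a \<Rightarrow> 'b"
    and B :: 'a and \<sigma> \<xi> :: real and X E Y :: "nat \<Rightarrow> 'a" and dt dth :: "nat \<Rightarrow> 'b"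
  assumes linJ: "linear J" and linP: "linear P" and linG: "linear G"
    and GJ: "\<And>v. G (J v) = v"
    and PJ: "\<And>v. P (J v) = J v"
    and Pin: "\<And>a b. P a \<bullet> b = P a \<bullet> P b"
    and sig: "\<sigma> > 0" and xi: "0 < \<xi>" "\<xi> < (1 + sqrt 5) / 2"
    and contf: "continuous_on UNIV f" and contg: "continuous_on UNIV g"
    and Hf: "\<And>k Z. f Z \<ge> f (X (Suc k)) + (Y k + \<sigma> *\<^sub>R (B + J (dt k) - X (Suc k) - E k)) \<bullet> (Z - X (Suc k))"
    and Hg: "\<And>k Z. g Z \<ge> g (E (Suc k)) + (Y k + \<sigma> *\<^sub>R (B + J (dth k) - X (Suc k) - E (Suc k))) \<bullet> (Z - E (Suc k))"
    and HJ: "\<And>k v. (Y k + \<sigma> *\<^sub>R (B + J (dt (Suc k)) - X (Suc k) - E (Suc k))) \<bullet> J v = 0"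
    and Hdth: "\<And>k. J (dth k) - J (dt (Suc k)) = P (E k - E (Suc k))"
    and HY: "\<And>k. Y (Suc k) = Y k + (\<xi> * \<sigma>) *\<^sub>R (B + J (dt (Suc k)) - X (Suc k) - E (Suc k))"
begin

definition kkt where
  "kkt Xb db Eb Yb \<longleftrightarrow> (\<forall>Z. f Z \<ge> f Xb + Yb \<bullet> (Z - Xb)) \<and> (\<forall>Z. g Z \<ge> g Eb + Yb \<bullet> (Z - Eb))
     \<and> (\<forall>v. Yb \<bullet> J v = 0) \<and> B + J db - Xb - Eb = 0"

definition r where "r k = B + J (dt k) - X k - E k"
definition Yh where "Yh k = Y k + \<sigma> *\<^sub>R r (Suc k)"
definition W where "W k = J (dt (Suc k) - dt k) - (E (Suc k) - E k)"
definition Hh where "Hh k = P (E (Suc k) - E k)"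

lemma Jdiff: "J (a - b) = J a - J b" using linJ by (simp add: linear_diff)
lemma Jadd: "J (a + b) = J a + J b" using linJ by (simp add: linear_add)
lemma Pdiff: "P (a - b) = P a - P b" using linP by (simp add: linear_diff)
lemma Pin2: "a \<bullet> P b = P a \<bullet> P b" using Pin[of b a] by (simp add: inner_commute)

lemma Yh_J: "Yh k \<bullet> J v = 0" unfolding Yh_def r_def using HJ by simp

lemma Yh_alt: "Yh k = Y (Suc k) + ((1 - \<xi>) * \<sigma>) *\<^sub>R r (Suc k)"
  unfolding Yh_def HY r_def by (simp add: algebra_simps)

lemma fsub: "f Z \<ge> f (X (Suc k)) + (Yh k - \<sigma> *\<^sub>R W k) \<bullet> (Z - X (Suc k))"
proof -
  have "Y k + \<sigma> *\<^sub>R (B + J (dt k) - X (Suc k) - E k) = Yh k - \<sigma> *\<^sub>R W k"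
    unfolding Yh_def r_def W_def Jdiff by (simp add: algebra_simps)
  thus ?thesis using Hf[of k Z] by simp
qed

lemma gsub: "g Z \<ge> g (E (Suc k)) + (Yh k - \<sigma> *\<^sub>R Hh k) \<bullet> (Z - E (Suc k))"
proof -
  have "Y k + \<sigma> *\<^sub>R (B + J (dth k) - X (Suc k) - E (Suc k)) =
        Yh k + \<sigma> *\<^sub>R (J (dth k) - J (dt (Suc k)))"
    unfolding Yh_def r_def by (simp add: algebra_simps)
  also have "\<dots> = Yh k - \<sigma> *\<^sub>R Hh k"
    unfolding Hdth Hh_def Pdiff by (simp add: algebra_simps)
  finally show ?thesis using Hg[of k Z] by simp
qed

lemma Hh_P: "Hh k \<bullet> a = Hh k \<bullet> P a" unfolding Hh_def by (rule Pin)


lemma stepB: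
  "- (\<sigma> * (r (Suc (Suc k)) \<bullet> W (Suc k))) - (\<xi> - 1) * \<sigma> * (r (Suc k) \<bullet> W (Suc k))
     \<ge> \<sigma> * ((Hh (Suc k) - Hh k) \<bullet> Hh (Suc k))"
proof -
  let ?E1 = "E (Suc k)" and ?E2 = "E (Suc (Suc k))"
  have g1: "g ?E1 \<ge> g ?E2 + (Yh (Suc k) - \<sigma> *\<^sub>R Hh (Suc k)) \<bullet> (?E1 - ?E2)" by (rule gsub)
  have g2: "g ?E2 \<ge> g ?E1 + (Yh k - \<sigma> *\<^sub>R Hh k) \<bullet> (?E2 - ?E1)" by (rule gsub)
  have mono: "((Yh (Suc k) - \<sigma> *\<^sub>R Hh (Suc k)) - (Yh k - \<sigma> *\<^sub>R Hh k)) \<bullet> (?E2 - ?E1) \<ge> 0"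
  proof -
    have "(Yh (Suc k) - \<sigma> *\<^sub>R Hh (Suc k)) \<bullet> (?E1 - ?E2) = - ((Yh (Suc k) - \<sigma> *\<^sub>R Hh (Suc k)) \<bullet> (?E2 - ?E1))"
      by (metis inner_minus_right minus_diff_eq)
    thus ?thesis using g1 g2 by (simp add: inner_diff_left)
  qed
  have dY: "Yh (Suc k) - Yh k = \<sigma> *\<^sub>R r (Suc (Suc k)) + ((\<xi> - 1) * \<sigma>) *\<^sub>R r (Suc k)"
    unfolding Yh_def HY r_def by (simp add: algebra_simps)
  have dE: "?E2 - ?E1 = J (dt (Suc (Suc k)) - dt (Suc k)) - W (Suc k)" unfolding W_def by simp
  have YJ: "(Yh (Suc k) - Yh k) \<bullet> J (dt (Suc (Suc k)) - dt (Suc k)) = 0"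
    using Yh_J by (simp add: inner_diff_left)
  have e1: "(Yh (Suc k) - Yh k) \<bullet> (?E2 - ?E1) = - (\<sigma> * (r (Suc (Suc k)) \<bullet> W (Suc k))) - (\<xi> - 1) * \<sigma> * (r (Suc k) \<bullet> W (Suc k))"
  proof -
    have "(Yh (Suc k) - Yh k) \<bullet> (?E2 - ?E1) = - ((Yh (Suc k) - Yh k) \<bullet> W (Suc k))"
      unfolding dE using YJ by (simp add: inner_diff_right)
    also have "\<dots> = - (\<sigma> * (r (Suc (Suc k)) \<bullet> W (Suc k))) - (\<xi> - 1) * \<sigma> * (r (Suc k) \<bullet> W (Suc k))"
      unfolding dY by (simp add: inner_add_left algebra_simps)
    finally show ?thesis .
  qed
  have e2: "(Hh (Suc k) - Hh k) \<bullet> (?E2 - ?E1) = (Hh (Suc k) - Hh k) \<bullet> Hh (Suc k)"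
  proof -
    have "Hh (Suc k) - Hh k = P (?E2 - ?E1 - (?E1 - E k))" unfolding Hh_def Pdiff by simp
    hence "(Hh (Suc k) - Hh k) \<bullet> (?E2 - ?E1) = (Hh (Suc k) - Hh k) \<bullet> P (?E2 - ?E1)"
      using Pin by metis
    thus ?thesis unfolding Hh_def by simp
  qed
  have "((Yh (Suc k) - \<sigma> *\<^sub>R Hh (Suc k)) - (Yh k - \<sigma> *\<^sub>R Hh k)) \<bullet> (?E2 - ?E1)
      = (Yh (Suc k) - Yh k) \<bullet> (?E2 - ?E1) - \<sigma> * ((Hh (Suc k) - Hh k) \<bullet> (?E2 - ?E1))"
    by (simp add: inner_diff_left algebra_simps)
  thus ?thesis using mono e1 e2 by (smt (verit))
qed


definition tt where "tt = (if \<xi> \<le> 1 then 1 else 1 / \<xi>)"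
definition c1 where "c1 = \<bar>\<xi> - 1\<bar> * tt"
definition c2 where "c2 = min (2 - \<xi> - c1) (1 - \<bar>\<xi> - 1\<bar> / tt)"

lemma tt_pos: "tt > 0" unfolding tt_def using xi by auto

lemma c2_pos: "c2 > 0"
proof (cases "\<xi> \<le> 1")
  case True
  thus ?thesis unfolding c2_def c1_def tt_def using xi by auto
next
  case False
  have g: "\<xi>^2 - \<xi> - 1 < 0" using golden xi by blast
  have a: "\<bar>\<xi> - 1\<bar> = \<xi> - 1" using False by simp
  have "2 - \<xi> - (\<xi> - 1) * (1 / \<xi>) = (1 + \<xi> - \<xi>^2) / \<xi>"
    using xi by (simp add: field_simps power2_eq_square)
  moreover have "(1 + \<xi> - \<xi>^2) / \<xi> > 0" using g xi by simp
  moreover have "1 - (\<xi> - 1) / (1 / \<xi>) = 1 + \<xi> - \<xi>^2"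
    using xi by (simp add: field_simps power2_eq_square)
  ultimately show ?thesis unfolding c2_def c1_def tt_def using False a g by auto
qed

lemma c1_nonneg: "c1 \<ge> 0" unfolding c1_def using tt_pos by simp

context
  fixes Xb db Eb Yb
  assumes K: "kkt Xb db Eb Yb"
begin

definition m where "m k = J (dt k - db) - (E k - Eb)"
definition p where "p k = P (E k - Eb)"

lemma Kf: "f Z \<ge> f Xb + Yb \<bullet> (Z - Xb)" using K unfolding kkt_def by blast
lemma Kg: "g Z \<ge> g Eb + Yb \<bullet> (Z - Eb)" using K unfolding kkt_def by blast
lemma KJ: "Yb \<bullet> J v = 0" using K unfolding kkt_def by blast
lemma Kr: "B + J db - Xb - Eb = 0" using K unfolding kkt_def by blast

lemma W_m: "W k = m (Suc k) - m k"
  unfolding W_def m_def Jdiff by (simp add: algebra_simps)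
lemma Hh_p: "Hh k = p (Suc k) - p k"
  unfolding Hh_def p_def Pdiff by (simp add: algebra_simps)

lemma Xe: "X k - Xb = m k - r k"
  using Kr unfolding m_def r_def Jdiff by (simp add: algebra_simps)

lemma Ee: "E k - Eb = J (dt k - db) - m k"
  unfolding m_def by simp

lemma stepA:
  "(Y k - Yb) \<bullet> r (Suc k) + \<sigma> * (r (Suc k) \<bullet> r (Suc k)) + \<sigma> * (W k \<bullet> m (Suc k))
     - \<sigma> * (W k \<bullet> r (Suc k)) + \<sigma> * (Hh k \<bullet> p (Suc k)) \<le> 0"
proof -
  let ?X1 = "X (Suc k)" and ?E1 = "E (Suc k)"
  have f1: "f Xb \<ge> f ?X1 + (Yh k - \<sigma> *\<^sub>R W k) \<bullet> (Xb - ?X1)" by (rule fsub)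
  have f2: "f ?X1 \<ge> f Xb + Yb \<bullet> (?X1 - Xb)" by (rule Kf)
  have g1: "g Eb \<ge> g ?E1 + (Yh k - \<sigma> *\<^sub>R Hh k) \<bullet> (Eb - ?E1)" by (rule gsub)
  have g2: "g ?E1 \<ge> g Eb + Yb \<bullet> (?E1 - Eb)" by (rule Kg)
  have mf: "(Yh k - \<sigma> *\<^sub>R W k - Yb) \<bullet> (?X1 - Xb) \<ge> 0"
  proof -
    have "(Yh k - \<sigma> *\<^sub>R W k) \<bullet> (Xb - ?X1) = - ((Yh k - \<sigma> *\<^sub>R W k) \<bullet> (?X1 - Xb))"
      by (metis inner_minus_right minus_diff_eq)
    thus ?thesis using f1 f2 by (simp add: inner_diff_left)
  qed
  have mg: "(Yh k - \<sigma> *\<^sub>R Hh k - Yb) \<bullet> (?E1 - Eb) \<ge> 0"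
  proof -
    have "(Yh k - \<sigma> *\<^sub>R Hh k) \<bullet> (Eb - ?E1) = - ((Yh k - \<sigma> *\<^sub>R Hh k) \<bullet> (?E1 - Eb))"
      by (metis inner_minus_right minus_diff_eq)
    thus ?thesis using g1 g2 by (simp add: inner_diff_left)
  qed
  have e1: "(Yh k - \<sigma> *\<^sub>R W k - Yb) \<bullet> (?X1 - Xb) =
     (Yh k - Yb) \<bullet> m (Suc k) - (Yh k - Yb) \<bullet> r (Suc k) - \<sigma> * (W k \<bullet> m (Suc k)) + \<sigma> * (W k \<bullet> r (Suc k))"
    unfolding Xe by (simp add: inner_diff_left inner_diff_right algebra_simps)
  have YJ: "(Yh k - Yb) \<bullet> J (dt (Suc k) - db) = 0" using Yh_J KJ by (simp add: inner_diff_left)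
  have e2: "(Yh k - \<sigma> *\<^sub>R Hh k - Yb) \<bullet> (?E1 - Eb) =
     - ((Yh k - Yb) \<bullet> m (Suc k)) - \<sigma> * (Hh k \<bullet> p (Suc k))"
  proof -
    have "(Yh k - \<sigma> *\<^sub>R Hh k - Yb) \<bullet> (?E1 - Eb) = (Yh k - Yb) \<bullet> (?E1 - Eb) - \<sigma> * (Hh k \<bullet> (?E1 - Eb))"
      by (simp add: inner_diff_left algebra_simps)
    also have "(Yh k - Yb) \<bullet> (?E1 - Eb) = - ((Yh k - Yb) \<bullet> m (Suc k))"
      unfolding Ee using YJ by (simp add: inner_diff_right)
    also have "Hh k \<bullet> (?E1 - Eb) = Hh k \<bullet> p (Suc k)" unfolding p_def by (rule Hh_P)
    finally show ?thesis by simp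
  qed
  have e3: "(Yh k - Yb) \<bullet> r (Suc k) = (Y k - Yb) \<bullet> r (Suc k) + \<sigma> * (r (Suc k) \<bullet> r (Suc k))"
    unfolding Yh_def by (simp add: inner_diff_left inner_add_left algebra_simps)
  show ?thesis using mf mg e1 e2 e3 by linarith
qed

definition Phi where
  "Phi k = (1 / (\<xi> * \<sigma>)) * ((Y k - Yb) \<bullet> (Y k - Yb)) + \<sigma> * (m k \<bullet> m k) + \<sigma> * (p k \<bullet> p k)"

lemma Phi_dec:
  "Phi k - Phi (Suc k) \<ge> (2 - \<xi>) * \<sigma> * (r (Suc k) \<bullet> r (Suc k)) + \<sigma> * (W k \<bullet> W k)
      + \<sigma> * (Hh k \<bullet> Hh k) - 2 * \<sigma> * (W k \<bullet> r (Suc k))"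
proof -
  let ?a = "Y k - Yb" and ?r = "r (Suc k)" and ?m = "m (Suc k)" and ?p = "p (Suc k)"
  have ya: "Y (Suc k) - Yb = ?a + (\<xi> * \<sigma>) *\<^sub>R ?r" unfolding HY r_def by (simp add: algebra_simps)
  have n1: "(Y (Suc k) - Yb) \<bullet> (Y (Suc k) - Yb) = ?a \<bullet> ?a + 2 * (\<xi> * \<sigma>) * (?a \<bullet> ?r) + (\<xi> * \<sigma>)^2 * (?r \<bullet> ?r)"
    unfolding ya by (simp add: inner_add_left inner_add_right inner_commute power2_eq_square algebra_simps)
  have mk: "m k = ?m - W k" using W_m by simp
  have n2: "m k \<bullet> m k = ?m \<bullet> ?m - 2 * (W k \<bullet> ?m) + W k \<bullet> W k"
    unfolding mk by (simp add: inner_diff_left inner_diff_right inner_commute algebra_simps)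
  have pk: "p k = ?p - Hh k" using Hh_p by simp
  have n3: "p k \<bullet> p k = ?p \<bullet> ?p - 2 * (Hh k \<bullet> ?p) + Hh k \<bullet> Hh k"
    unfolding pk by (simp add: inner_diff_left inner_diff_right inner_commute algebra_simps)
  have xs: "\<xi> * \<sigma> > 0" using xi sig by simp
  have "(1 / (\<xi> * \<sigma>)) * (?a \<bullet> ?a) - (1 / (\<xi> * \<sigma>)) * ((Y (Suc k) - Yb) \<bullet> (Y (Suc k) - Yb))
        = - 2 * (?a \<bullet> ?r) - \<xi> * \<sigma> * (?r \<bullet> ?r)"
  proof -
    let ?c = "\<xi> * \<sigma>"
    have q1: "(1 / ?c) * (2 * ?c * (?a \<bullet> ?r)) = 2 * (?a \<bullet> ?r)" using xi sig by simp
    have q2: "(1 / ?c) * (?c^2 * (?r \<bullet> ?r)) = ?c * (?r \<bullet> ?r)" using xi sig by (simp add: power2_eq_square)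
    have "(1 / ?c) * (?a \<bullet> ?a + 2 * ?c * (?a \<bullet> ?r) + ?c^2 * (?r \<bullet> ?r))
       = (1 / ?c) * (?a \<bullet> ?a) + (1 / ?c) * (2 * ?c * (?a \<bullet> ?r)) + (1 / ?c) * (?c^2 * (?r \<bullet> ?r))"
      by (simp only: distrib_left)
    thus ?thesis unfolding n1 using q1 q2 by simp
  qed
  hence "Phi k - Phi (Suc k) = - 2 * (?a \<bullet> ?r) - \<xi> * \<sigma> * (?r \<bullet> ?r) + \<sigma> * (W k \<bullet> W k)
      - 2 * \<sigma> * (W k \<bullet> ?m) + \<sigma> * (Hh k \<bullet> Hh k) - 2 * \<sigma> * (Hh k \<bullet> ?p)"
    unfolding Phi_def n2 n3 by (simp add: algebra_simps)
  moreover have "?a \<bullet> ?r + \<sigma> * (?r \<bullet> ?r) + \<sigma> * (W k \<bullet> ?m) - \<sigma> * (W k \<bullet> ?r) + \<sigma> * (Hh k \<bullet> ?p) \<le> 0"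
    by (rule stepA)
  ultimately show ?thesis by (simp add: algebra_simps)
qed

definition V where
  "V k = Phi (Suc k) + c1 * \<sigma> * (r (Suc k) \<bullet> r (Suc k)) + \<sigma> * (Hh k \<bullet> Hh k)"

lemma V_dec:
  "V k - V (Suc k) \<ge> c2 * \<sigma> * (r (Suc (Suc k)) \<bullet> r (Suc (Suc k)) + W (Suc k) \<bullet> W (Suc k))
      + \<sigma> * (Hh (Suc k) \<bullet> Hh (Suc k))"
proof -
  let ?R1 = "r (Suc k) \<bullet> r (Suc k)" and ?R2 = "r (Suc (Suc k)) \<bullet> r (Suc (Suc k))"
  let ?W1 = "W (Suc k) \<bullet> W (Suc k)" and ?H0 = "Hh k \<bullet> Hh k" and ?H1 = "Hh (Suc k) \<bullet> Hh (Suc k)"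
  let ?WR = "W (Suc k) \<bullet> r (Suc (Suc k))" and ?Z = "r (Suc k) \<bullet> W (Suc k)"
  let ?s = "\<xi> - 1"
  have pd: "Phi (Suc k) - Phi (Suc (Suc k)) \<ge> (2 - \<xi>) * \<sigma> * ?R2 + \<sigma> * ?W1 + \<sigma> * ?H1 - 2 * \<sigma> * ?WR"
    by (rule Phi_dec)
  have sb: "- (\<sigma> * (r (Suc (Suc k)) \<bullet> W (Suc k))) - ?s * \<sigma> * ?Z \<ge> \<sigma> * ((Hh (Suc k) - Hh k) \<bullet> Hh (Suc k))"
    by (rule stepB)
  have y1: "2 * \<bar>Hh k \<bullet> Hh (Suc k)\<bar> \<le> 1 * ?H0 + ?H1 / 1" by (rule young_inner) simp
  have y2: "2 * \<bar>?Z\<bar> \<le> tt * ?R1 + ?W1 / tt" by (rule young_inner[OF tt_pos])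
  have y2': "\<bar>?s\<bar> * \<sigma> * (2 * \<bar>?Z\<bar>) \<le> \<bar>?s\<bar> * \<sigma> * (tt * ?R1 + ?W1 / tt)"
    using y2 sig by (intro mult_left_mono) auto
  have sz: "- (?s * ?Z) \<le> \<bar>?s\<bar> * \<bar>?Z\<bar>" by (metis abs_ge_minus_self abs_mult)
  have sz': "- (?s * \<sigma> * ?Z) \<le> \<bar>?s\<bar> * \<sigma> * \<bar>?Z\<bar>"
  proof -
    have "\<sigma> * (- (?s * ?Z)) \<le> \<sigma> * (\<bar>?s\<bar> * \<bar>?Z\<bar>)" using sz sig by (intro mult_left_mono) auto
    thus ?thesis by (simp add: algebra_simps)
  qed
  have hh: "(Hh (Suc k) - Hh k) \<bullet> Hh (Suc k) = ?H1 - Hh k \<bullet> Hh (Suc k)" by (simp add: inner_diff_left)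
  have h2: "\<sigma> * (Hh k \<bullet> Hh (Suc k)) \<le> \<sigma> * ((?H0 + ?H1) / 2)"
    using y1 sig by (intro mult_left_mono) auto
  have rw: "r (Suc (Suc k)) \<bullet> W (Suc k) = ?WR" by (simp add: inner_commute)
  have main: "- 2 * \<sigma> * ?WR \<ge> \<sigma> * ?H1 - \<sigma> * ?H0 - \<bar>?s\<bar> * \<sigma> * (tt * ?R1 + ?W1 / tt)"
    using sb hh h2 y2' sz' rw by (simp add: algebra_simps)
  have V1: "V k - V (Suc k) \<ge> (2 - \<xi> - c1) * \<sigma> * ?R2 + (1 - \<bar>?s\<bar> / tt) * \<sigma> * ?W1 + \<sigma> * ?H1"
  proof -
    have e: "\<bar>?s\<bar> * \<sigma> * (tt * ?R1 + ?W1 / tt) = c1 * \<sigma> * ?R1 + (\<bar>?s\<bar> / tt) * \<sigma> * ?W1"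
      unfolding c1_def by (simp add: algebra_simps)
    show ?thesis unfolding V_def by (rule arith1[OF pd main e])
  qed
  have nn: "?R2 \<ge> 0" "?W1 \<ge> 0" by simp_all
  have "c2 * \<sigma> * ?R2 \<le> (2 - \<xi> - c1) * \<sigma> * ?R2"
    using nn sig unfolding c2_def by (intro mult_right_mono) auto
  moreover have "c2 * \<sigma> * ?W1 \<le> (1 - \<bar>?s\<bar> / tt) * \<sigma> * ?W1"
    using nn sig unfolding c2_def by (intro mult_right_mono) auto
  ultimately show ?thesis using V1 by (simp add: algebra_simps)
qed



lemma E_bnd: "norm (E k - Eb) \<le> norm (p k) + norm (m k)"
proof -
  let ?e = "E k - Eb" and ?m = "m k"
  have Pm: "P ?m = J (dt k - db) - P ?e" unfolding m_def Pdiff PJ ..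
  have em: "?e = p k - (?m - P ?m)" unfolding p_def Pm by (simp add: m_def algebra_simps)
  have "(?m - P ?m) \<bullet> (?m - P ?m) = ?m \<bullet> ?m - P ?m \<bullet> P ?m"
    using Pin[of ?m ?m] Pin2[of ?m ?m]
    by (simp add: inner_diff_left inner_diff_right inner_commute)
  hence "(?m - P ?m) \<bullet> (?m - P ?m) \<le> ?m \<bullet> ?m" by simp
  hence nm: "norm (?m - P ?m) \<le> norm ?m" by (simp add: norm_le)
  have "norm ?e \<le> norm (p k) + norm (?m - P ?m)" unfolding em by (rule norm_triangle_ineq4)
  thus ?thesis using nm by simp
qed

lemma Jd_eq: "J (dt k - db) = m k + (E k - Eb)" unfolding m_def by simp


lemma Phi_nonneg: "Phi k \<ge> 0"
  unfolding Phi_def using xi sig by (intro add_nonneg_nonneg mult_nonneg_nonneg) auto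

lemma V_nonneg: "V k \<ge> 0"
  unfolding V_def using Phi_nonneg c1_nonneg sig by (intro add_nonneg_nonneg mult_nonneg_nonneg) auto

definition D where
  "D k = c2 * \<sigma> * (r (Suc (Suc k)) \<bullet> r (Suc (Suc k)) + W (Suc k) \<bullet> W (Suc k)) + \<sigma> * (Hh (Suc k) \<bullet> Hh (Suc k))"

lemma D_nonneg: "D k \<ge> 0"
  unfolding D_def using c2_pos sig by (intro add_nonneg_nonneg mult_nonneg_nonneg) auto

lemma D_parts:
  "D k = c2 * \<sigma> * (r (Suc (Suc k)) \<bullet> r (Suc (Suc k))) + c2 * \<sigma> * (W (Suc k) \<bullet> W (Suc k))
         + \<sigma> * (Hh (Suc k) \<bullet> Hh (Suc k))"
  "c2 * \<sigma> * (r (Suc (Suc k)) \<bullet> r (Suc (Suc k))) \<ge> 0"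
  "c2 * \<sigma> * (W (Suc k) \<bullet> W (Suc k)) \<ge> 0"
  "\<sigma> * (Hh (Suc k) \<bullet> Hh (Suc k)) \<ge> 0"
  unfolding D_def using c2_pos sig by (auto simp: algebra_simps)

lemma V_mono: "V (Suc k) \<le> V k"
  using V_dec[of k] D_nonneg[of k] unfolding D_def by linarith

lemma V_le0: "V k \<le> V 0"
  by (induction k) (auto intro: order_trans[OF V_mono])

lemma D_zero: "D \<longlonglongrightarrow> 0"
proof -
  have "summable D"
  proof (rule summableI_nonneg_bounded[OF D_nonneg])
    fix n
    have "(\<Sum>k<n. D k) \<le> (\<Sum>k<n. V k - V (Suc k))"
      by (intro sum_mono) (use V_dec D_def in auto)
    also have "\<dots> = V 0 - V n" by (rule sum_lessThan_telescope')
    also have "\<dots> \<le> V 0" using V_nonneg[of n] by simp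
    finally show "(\<Sum>k<n. D k) \<le> V 0" .
  qed
  thus ?thesis by (rule summable_LIMSEQ_zero)
qed

lemma Y_bnd: "(Y (Suc k) - Yb) \<bullet> (Y (Suc k) - Yb) \<le> \<xi> * \<sigma> * V k"
proof -
  have xs: "\<xi> * \<sigma> > 0" using xi sig by simp
  have "(1 / (\<xi> * \<sigma>)) * ((Y (Suc k) - Yb) \<bullet> (Y (Suc k) - Yb)) \<le> V k"
    unfolding V_def Phi_def using sig c1_nonneg
    by (simp add: add_nonneg_nonneg)
  thus ?thesis using xs by (simp add: field_simps)
qed

lemma m_bnd: "m (Suc k) \<bullet> m (Suc k) \<le> V k / \<sigma>"
proof -
  have "\<sigma> * (m (Suc k) \<bullet> m (Suc k)) \<le> V k"
    unfolding V_def Phi_def using sig xi c1_nonneg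
    by (simp add: add_nonneg_nonneg)
  thus ?thesis using sig by (simp add: field_simps)
qed

lemma p_bnd: "p (Suc k) \<bullet> p (Suc k) \<le> V k / \<sigma>"
proof -
  have "\<sigma> * (p (Suc k) \<bullet> p (Suc k)) \<le> V k"
    unfolding V_def Phi_def using sig xi c1_nonneg
    by (simp add: add_nonneg_nonneg)
  thus ?thesis using sig by (simp add: field_simps)
qed

lemma seq_zero: "r \<longlonglongrightarrow> 0" "W \<longlonglongrightarrow> 0" "Hh \<longlonglongrightarrow> 0"
proof -
  have cs: "c2 * \<sigma> > 0" using c2_pos sig by simp
  have Dc: "(\<lambda>k. D k / (c2 * \<sigma>)) \<longlonglongrightarrow> 0" using tendsto_divide_zero[OF D_zero] by simp
  have Ds: "(\<lambda>k. D k / \<sigma>) \<longlonglongrightarrow> 0" using tendsto_divide_zero[OF D_zero] by simp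
  have "(\<lambda>k. r (Suc (Suc k)) \<bullet> r (Suc (Suc k))) \<longlonglongrightarrow> 0"
  proof (rule sandwich0[OF _ _ Dc])
    fix k
    have "c2 * \<sigma> * (r (Suc (Suc k)) \<bullet> r (Suc (Suc k))) \<le> D k"
      using D_parts[of k] by linarith
    thus "r (Suc (Suc k)) \<bullet> r (Suc (Suc k)) \<le> D k / (c2 * \<sigma>)" using cs by (simp add: field_simps)
  qed simp
  hence "(\<lambda>k. r (Suc (Suc k))) \<longlonglongrightarrow> 0" by (rule nn_tendsto_zero)
  thus "r \<longlonglongrightarrow> 0" by (rule shift2)
  have "(\<lambda>k. W (Suc k) \<bullet> W (Suc k)) \<longlonglongrightarrow> 0"
  proof (rule sandwich0[OF _ _ Dc])
    fix k
    have "c2 * \<sigma> * (W (Suc k) \<bullet> W (Suc k)) \<le> D k"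
      using D_parts[of k] by linarith
    thus "W (Suc k) \<bullet> W (Suc k) \<le> D k / (c2 * \<sigma>)" using cs by (simp add: field_simps)
  qed simp
  hence "(\<lambda>k. W (Suc k)) \<longlonglongrightarrow> 0" by (rule nn_tendsto_zero)
  thus "W \<longlonglongrightarrow> 0" by (rule LIMSEQ_imp_Suc)
  have "(\<lambda>k. Hh (Suc k) \<bullet> Hh (Suc k)) \<longlonglongrightarrow> 0"
  proof (rule sandwich0[OF _ _ Ds])
    fix k
    have "\<sigma> * (Hh (Suc k) \<bullet> Hh (Suc k)) \<le> D k"
      using D_parts[of k] by linarith
    thus "Hh (Suc k) \<bullet> Hh (Suc k) \<le> D k / \<sigma>" using sig by (simp add: field_simps)
  qed simp
  hence "(\<lambda>k. Hh (Suc k)) \<longlonglongrightarrow> 0" by (rule nn_tendsto_zero)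
  thus "Hh \<longlonglongrightarrow> 0" by (rule LIMSEQ_imp_Suc)
qed

end


lemma norm_sub_le: "norm x \<le> norm (x - y) + norm (y::'c::real_normed_vector)"
  using norm_triangle_ineq[of "x - y" y] by simp

lemma nn_norm_le: "x \<bullet> x \<le> c \<Longrightarrow> norm x \<le> sqrt c"
  by (simp add: norm_eq_sqrt_inner real_sqrt_le_mono)

lemma f_lim:
  fixes h :: "'a \<Rightarrow> real"
  assumes "continuous_on UNIV h" "s \<longlonglongrightarrow> l"
  shows "(\<lambda>k. h (s k)) \<longlonglongrightarrow> h l"
proof -
  have "isCont h l" using assms(1) by (simp add: continuous_on_eq_continuous_at)
  thus ?thesis using assms(2) by (rule isCont_tendsto_compose)
qed

lemma bl_J: "bounded_linear J" using linJ by (simp add: linear_conv_bounded_linear)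
lemma bl_P: "bounded_linear P" using linP by (simp add: linear_conv_bounded_linear)
lemma bl_G: "bounded_linear G" using linG by (simp add: linear_conv_bounded_linear)

lemma J_lim: "s \<longlonglongrightarrow> l \<Longrightarrow> (\<lambda>k. J (s k)) \<longlonglongrightarrow> J l" using bounded_linear.tendsto[OF bl_J] .
lemma P_lim: "s \<longlonglongrightarrow> l \<Longrightarrow> (\<lambda>k. P (s k)) \<longlonglongrightarrow> P l" using bounded_linear.tendsto[OF bl_P] .
lemma G_lim: "s \<longlonglongrightarrow> l \<Longrightarrow> (\<lambda>k. G (s k)) \<longlonglongrightarrow> G l" using bounded_linear.tendsto[OF bl_G] .
lemma J0: "J 0 = 0" using linJ by (simp add: linear_0)
lemma P0: "P 0 = 0" using linP by (simp add: linear_0)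
lemma G0: "G 0 = 0" using linG by (simp add: linear_0)

lemma Gdt: "dt k - db = G (J (dt k - db))" by (simp add: GJ)

theorem converge:
  assumes K0: "kkt Xb db Eb Yb"
  shows "\<exists>Xl dl El Yl. X \<longlonglongrightarrow> Xl \<and> dt \<longlonglongrightarrow> dl \<and> E \<longlonglongrightarrow> El \<and> Y \<longlonglongrightarrow> Yl \<and> kkt Xl dl El Yl"
proof -
  note z = seq_zero[OF K0]
  obtain KG where KG: "\<And>x. norm (G x) \<le> KG * norm x" using linear_bounded[OF linG] by blast
  have KG': "norm (G x) \<le> \<bar>KG\<bar> * norm x" for x using KG[of x] by (smt (verit) mult_right_mono norm_ge_zero)
  obtain Kr where Kr: "\<And>k. norm (r k) \<le> Kr"
    using convergent_imp_Bseq[OF convergentI[OF z(1)]] by (auto simp: Bseq_def)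
  define V0 where "V0 = V db Eb Yb 0"
  have bY: "norm (Y (Suc k) - Yb) \<le> sqrt (\<xi> * \<sigma> * V0)" for k
  proof (rule nn_norm_le)
    have "\<xi> * \<sigma> * V db Eb Yb k \<le> \<xi> * \<sigma> * V0" unfolding V0_def
      using V_le0[OF K0] xi sig by (intro mult_left_mono) auto
    thus "(Y (Suc k) - Yb) \<bullet> (Y (Suc k) - Yb) \<le> \<xi> * \<sigma> * V0" using Y_bnd[OF K0, of k] by linarith
  qed
  have bm: "norm (m db Eb (Suc k)) \<le> sqrt (V0 / \<sigma>)" for k
  proof (rule nn_norm_le)
    have "V db Eb Yb k / \<sigma> \<le> V0 / \<sigma>" unfolding V0_def
      using V_le0[OF K0] sig by (simp add: divide_right_mono)
    thus "m db Eb (Suc k) \<bullet> m db Eb (Suc k) \<le> V0 / \<sigma>" using m_bnd[OF K0, of k] by linarith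
  qed
  have bp: "norm (p Eb (Suc k)) \<le> sqrt (V0 / \<sigma>)" for k
  proof (rule nn_norm_le)
    have "V db Eb Yb k / \<sigma> \<le> V0 / \<sigma>" unfolding V0_def
      using V_le0[OF K0] sig by (simp add: divide_right_mono)
    thus "p Eb (Suc k) \<bullet> p Eb (Suc k) \<le> V0 / \<sigma>" using p_bnd[OF K0, of k] by linarith
  qed
  define cm where "cm = sqrt (V0 / \<sigma>)"
  have bE: "norm (E (Suc k) - Eb) \<le> 2 * cm" for k
    using E_bnd[OF K0, of "Suc k"] bm[of k] bp[of k] unfolding cm_def by linarith
  have bD: "norm (dt (Suc k) - db) \<le> \<bar>KG\<bar> * (3 * cm)" for k
  proof -
    have "norm (dt (Suc k) - db) \<le> \<bar>KG\<bar> * norm (J (dt (Suc k) - db))"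
      using KG' Gdt by metis
    also have "norm (J (dt (Suc k) - db)) \<le> 3 * cm"
      unfolding Jd_eq[OF K0] using norm_triangle_ineq[of "m db Eb (Suc k)" "E (Suc k) - Eb"] bm[of k] bE[of k]
      unfolding cm_def by linarith
    hence "\<bar>KG\<bar> * norm (J (dt (Suc k) - db)) \<le> \<bar>KG\<bar> * (3 * cm)" by (intro mult_left_mono) auto
    finally show ?thesis .
  qed
  have bX: "norm (X (Suc k) - Xb) \<le> cm + Kr" for k
    unfolding Xe[OF K0] using norm_triangle_ineq4[of "m db Eb (Suc k)" "r (Suc k)"] bm[of k] Kr[of "Suc k"]
    unfolding cm_def by linarith
  define T where "T k = (X (Suc k), dt (Suc k), E (Suc k), Y (Suc k))" for k
  have "bounded (range T)"
    unfolding bounded_iff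
  proof (intro exI ballI)
    fix x assume "x \<in> range T"
    then obtain k where xk: "x = T k" by blast
    have "norm x \<le> norm (X (Suc k)) + (norm (dt (Suc k)) + (norm (E (Suc k)) + norm (Y (Suc k))))"
      unfolding xk T_def by (meson add_left_mono norm_Pair_le order_trans)
    also have "\<dots> \<le> (cm + Kr + norm Xb) + ((\<bar>KG\<bar> * (3 * cm) + norm db) + ((2 * cm + norm Eb) + (sqrt (\<xi> * \<sigma> * V0) + norm Yb)))"
      using norm_sub_le[of "X (Suc k)" Xb] norm_sub_le[of "dt (Suc k)" db] norm_sub_le[of "E (Suc k)" Eb]
        norm_sub_le[of "Y (Suc k)" Yb] bX[of k] bD[of k] bE[of k] bY[of k] by linarith
    finally show "norm x \<le> (cm + Kr + norm Xb) + ((\<bar>KG\<bar> * (3 * cm) + norm db) + ((2 * cm + norm Eb) + (sqrt (\<xi> * \<sigma> * V0) + norm Yb)))" .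
  qed
  then obtain l \<phi> where \<phi>: "strict_mono \<phi>" and lim: "(T \<circ> \<phi>) \<longlonglongrightarrow> l"
    using bounded_imp_convergent_subsequence by blast
  obtain Xl dl El Yl where l: "l = (Xl, dl, El, Yl)" by (cases l) auto
  have Xs: "(\<lambda>k. X (Suc (\<phi> k))) \<longlonglongrightarrow> Xl" using tendsto_fst[OF lim] unfolding l T_def o_def by simp
  have ds: "(\<lambda>k. dt (Suc (\<phi> k))) \<longlonglongrightarrow> dl" using tendsto_fst[OF tendsto_snd[OF lim]] unfolding l T_def o_def by simp
  have Es: "(\<lambda>k. E (Suc (\<phi> k))) \<longlonglongrightarrow> El" using tendsto_fst[OF tendsto_snd[OF tendsto_snd[OF lim]]] unfolding l T_def o_def by simp
  have Ys: "(\<lambda>k. Y (Suc (\<phi> k))) \<longlonglongrightarrow> Yl" using tendsto_snd[OF tendsto_snd[OF tendsto_snd[OF lim]]] unfolding l T_def o_def by simp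
  have rs: "(\<lambda>k. r (Suc (\<phi> k))) \<longlonglongrightarrow> 0" using LIMSEQ_subseq_LIMSEQ[OF LIMSEQ_Suc[OF z(1)] \<phi>] by (simp add: o_def)
  have Ws: "(\<lambda>k. W (\<phi> k)) \<longlonglongrightarrow> 0" using LIMSEQ_subseq_LIMSEQ[OF z(2) \<phi>] by (simp add: o_def)
  have Hs: "(\<lambda>k. Hh (\<phi> k)) \<longlonglongrightarrow> 0" using LIMSEQ_subseq_LIMSEQ[OF z(3) \<phi>] by (simp add: o_def)
  have Yhs: "(\<lambda>k. Yh (\<phi> k)) \<longlonglongrightarrow> Yl"
  proof -
    have "(\<lambda>k. Y (Suc (\<phi> k)) + ((1 - \<xi>) * \<sigma>) *\<^sub>R r (Suc (\<phi> k))) \<longlonglongrightarrow> Yl + ((1 - \<xi>) * \<sigma>) *\<^sub>R 0"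
      by (intro tendsto_intros Ys rs)
    thus ?thesis by (simp add: Yh_alt)
  qed
  have Kl: "kkt Xl dl El Yl" unfolding kkt_def
  proof (intro conjI allI)
    fix Z
    have "(\<lambda>k. f (X (Suc (\<phi> k))) + (Yh (\<phi> k) - \<sigma> *\<^sub>R W (\<phi> k)) \<bullet> (Z - X (Suc (\<phi> k))))
          \<longlonglongrightarrow> f Xl + (Yl - \<sigma> *\<^sub>R 0) \<bullet> (Z - Xl)"
      by (intro tendsto_intros f_lim[OF contf Xs] Yhs Ws Xs)
    hence "f Xl + (Yl - \<sigma> *\<^sub>R 0) \<bullet> (Z - Xl) \<le> f Z"
      by (rule LIMSEQ_le_const2) (use fsub in blast)
    thus "f Xl + Yl \<bullet> (Z - Xl) \<le> f Z" by simp
  next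
    fix Z
    have "(\<lambda>k. g (E (Suc (\<phi> k))) + (Yh (\<phi> k) - \<sigma> *\<^sub>R Hh (\<phi> k)) \<bullet> (Z - E (Suc (\<phi> k))))
          \<longlonglongrightarrow> g El + (Yl - \<sigma> *\<^sub>R 0) \<bullet> (Z - El)"
      by (intro tendsto_intros f_lim[OF contg Es] Yhs Hs Es)
    hence "g El + (Yl - \<sigma> *\<^sub>R 0) \<bullet> (Z - El) \<le> g Z"
      by (rule LIMSEQ_le_const2) (use gsub in blast)
    thus "g El + Yl \<bullet> (Z - El) \<le> g Z" by simp
  next
    fix v
    have "(\<lambda>k. Yh (\<phi> k) \<bullet> J v) \<longlonglongrightarrow> Yl \<bullet> J v" by (intro tendsto_intros Yhs)
    moreover have "(\<lambda>k. Yh (\<phi> k) \<bullet> J v) = (\<lambda>k. 0)" using Yh_J by simp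
    ultimately show "Yl \<bullet> J v = 0" using LIMSEQ_unique tendsto_const by metis
  next
    have "(\<lambda>k. B + J (dt (Suc (\<phi> k))) - X (Suc (\<phi> k)) - E (Suc (\<phi> k))) \<longlonglongrightarrow> B + J dl - Xl - El"
      by (intro tendsto_intros J_lim ds Xs Es)
    moreover have "(\<lambda>k. B + J (dt (Suc (\<phi> k))) - X (Suc (\<phi> k)) - E (Suc (\<phi> k))) \<longlonglongrightarrow> 0"
      using rs unfolding r_def .
    ultimately show "B + J dl - Xl - El = 0" using LIMSEQ_unique by blast
  qed
  define Vl where "Vl = V dl El Yl"
  have Yd: "(\<lambda>k. Y (Suc (\<phi> k)) - Yl) \<longlonglongrightarrow> 0" using Ys by (simp add: LIM_zero)
  have md: "(\<lambda>k. m dl El (Suc (\<phi> k))) \<longlonglongrightarrow> 0"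
  proof -
    have "(\<lambda>k. J (dt (Suc (\<phi> k)) - dl) - (E (Suc (\<phi> k)) - El)) \<longlonglongrightarrow> J (dl - dl) - (El - El)"
      by (intro tendsto_intros J_lim ds Es)
    thus ?thesis using m_def[OF Kl] by (simp add: J0)
  qed
  have pd: "(\<lambda>k. p El (Suc (\<phi> k))) \<longlonglongrightarrow> 0"
  proof -
    have "(\<lambda>k. P (E (Suc (\<phi> k)) - El)) \<longlonglongrightarrow> P (El - El)"
      by (intro tendsto_intros P_lim Es)
    thus ?thesis using p_def[OF Kl] by (simp add: P0)
  qed
  have "(\<lambda>k. Vl (\<phi> k)) \<longlonglongrightarrow>
      (1 / (\<xi> * \<sigma>)) * ((0::'a) \<bullet> 0) + \<sigma> * ((0::'a) \<bullet> 0) + \<sigma> * ((0::'a) \<bullet> 0) + c1 * \<sigma> * ((0::'a) \<bullet> 0) + \<sigma> * ((0::'a) \<bullet> 0)"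
    unfolding Vl_def V_def[OF Kl] Phi_def[OF Kl] by (intro tendsto_intros tendsto_inner Yd md pd rs Hs)
  hence Vphi: "(Vl \<circ> \<phi>) \<longlonglongrightarrow> 0" by (simp add: o_def)
  have Vz: "Vl \<longlonglongrightarrow> 0"
    by (rule mono_sub_zero[OF _ _ \<phi> Vphi]) (use V_mono[OF Kl] V_nonneg[OF Kl] Vl_def in auto)
  have xs: "\<xi> * \<sigma> > 0" using xi sig by simp
  have "(\<lambda>k. Y (Suc k) - Yl) \<longlonglongrightarrow> 0"
  proof (rule nn_tendsto_zero, rule sandwich0)
    show "(\<lambda>k. \<xi> * \<sigma> * Vl k) \<longlonglongrightarrow> 0" using tendsto_mult_right_zero[OF Vz] by simp
    show "(Y (Suc k) - Yl) \<bullet> (Y (Suc k) - Yl) \<le> \<xi> * \<sigma> * Vl k" for k using Y_bnd[OF Kl] Vl_def by simp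
  qed simp
  hence "(\<lambda>k. Y (Suc k)) \<longlonglongrightarrow> Yl" by (rule LIM_zero_cancel)
  hence YL: "Y \<longlonglongrightarrow> Yl" by (rule LIMSEQ_imp_Suc)
  have mz: "(\<lambda>k. m dl El (Suc k)) \<longlonglongrightarrow> 0"
  proof (rule nn_tendsto_zero, rule sandwich0)
    show "(\<lambda>k. Vl k / \<sigma>) \<longlonglongrightarrow> 0" using tendsto_divide_zero[OF Vz] by simp
    show "m dl El (Suc k) \<bullet> m dl El (Suc k) \<le> Vl k / \<sigma>" for k using m_bnd[OF Kl] Vl_def by simp
  qed simp
  have pz: "(\<lambda>k. p El (Suc k)) \<longlonglongrightarrow> 0"
  proof (rule nn_tendsto_zero, rule sandwich0)
    show "(\<lambda>k. Vl k / \<sigma>) \<longlonglongrightarrow> 0" using tendsto_divide_zero[OF Vz] by simp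
    show "p El (Suc k) \<bullet> p El (Suc k) \<le> Vl k / \<sigma>" for k using p_bnd[OF Kl] Vl_def by simp
  qed simp
  have nmz: "(\<lambda>k. norm (m dl El (Suc k))) \<longlonglongrightarrow> 0" using mz by (simp add: tendsto_norm_zero_iff)
  have npz: "(\<lambda>k. norm (p El (Suc k))) \<longlonglongrightarrow> 0" using pz by (simp add: tendsto_norm_zero_iff)
  have nrz: "(\<lambda>k. norm (r (Suc k))) \<longlonglongrightarrow> 0" using LIMSEQ_Suc[OF z(1)] by (simp add: tendsto_norm_zero_iff)
  have EL': "(\<lambda>k. E (Suc k)) \<longlonglongrightarrow> El"
    by (rule conv_by_bound[OF E_bnd[OF Kl]]) (use tendsto_add_zero[OF npz nmz] in simp)
  hence EL: "E \<longlonglongrightarrow> El" by (rule LIMSEQ_imp_Suc)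
  have nEz: "(\<lambda>k. norm (E (Suc k) - El)) \<longlonglongrightarrow> 0" using EL' by (simp add: tendsto_norm_zero_iff LIM_zero)
  have dL: "dt \<longlonglongrightarrow> dl"
  proof (rule LIMSEQ_imp_Suc, rule conv_by_bound)
    fix k
    have "norm (dt (Suc k) - dl) \<le> \<bar>KG\<bar> * norm (J (dt (Suc k) - dl))" using KG' Gdt by metis
    also have "\<dots> \<le> \<bar>KG\<bar> * (norm (m dl El (Suc k)) + norm (E (Suc k) - El))"
      unfolding Jd_eq[OF Kl] by (intro mult_left_mono norm_triangle_ineq) auto
    finally show "norm (dt (Suc k) - dl) \<le> \<bar>KG\<bar> * (norm (m dl El (Suc k)) + norm (E (Suc k) - El))" .
    show "(\<lambda>k. \<bar>KG\<bar> * (norm (m dl El (Suc k)) + norm (E (Suc k) - El))) \<longlonglongrightarrow> 0"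
      using tendsto_mult_right_zero[OF tendsto_add_zero[OF nmz nEz]] by simp
  qed
  have XL: "X \<longlonglongrightarrow> Xl"
  proof (rule LIMSEQ_imp_Suc, rule conv_by_bound)
    fix k
    show "norm (X (Suc k) - Xl) \<le> norm (m dl El (Suc k)) + norm (r (Suc k))"
      unfolding Xe[OF Kl] by (rule norm_triangle_ineq4)
    show "(\<lambda>k. norm (m dl El (Suc k)) + norm (r (Suc k))) \<longlonglongrightarrow> 0"
      using tendsto_add_zero[OF nmz nrz] by simp
  qed
  show ?thesis using XL dL EL YL Kl by blast
qed

end

theorem theorem3:
  fixes B :: "real^'n^'m" and J :: "real^'p \<Rightarrow> real^'n^'m"
    and lam \<sigma> \<xi> :: real
    and X E Y :: "nat \<Rightarrow> real^'n^'m" and dt dth :: "nat \<Rightarrow> real^'p"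
  assumes lin: "linear J"
    and inv: "bij (adjoint J \<circ> J)"
    and lam: "lam > 0" and sig: "\<sigma> > 0"
    and xi: "0 < \<xi>" "\<xi> < (1 + sqrt 5) / 2"
    and stepX: "\<And>k. X (Suc k) = svt (1/\<sigma>) (B + J (dt k) - E k + (1/\<sigma>) *\<^sub>R Y k)"
    and stepT1: "\<And>k. dth k = - inv (adjoint J \<circ> J)
                     (adjoint J (B - X (Suc k) - E k) + (1/\<sigma>) *\<^sub>R adjoint J (Y k))"
    and stepE: "\<And>k. E (Suc k) = soft (lam / \<sigma>) (B + J (dth k) - X (Suc k) + (1/\<sigma>) *\<^sub>R Y k)"
    and stepT2: "\<And>k. dt (Suc k) = - inv (adjoint J \<circ> J)
                     (adjoint J (B - X (Suc k) - E (Suc k)) + (1/\<sigma>) *\<^sub>R adjoint J (Y k))"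
    and stepY: "\<And>k. Y (Suc k) = Y k + (\<xi> * \<sigma>) *\<^sub>R (B + J (dt (Suc k)) - X (Suc k) - E (Suc k))"
  shows "\<exists>Xb tb Eb Yb. X \<longlonglongrightarrow> Xb \<and> dt \<longlonglongrightarrow> tb \<and> E \<longlonglongrightarrow> Eb \<and> Y \<longlonglongrightarrow> Yb \<and>
           optimal_P B J lam Xb tb Eb"
proof -
  define A where "A = adjoint J"
  define Gi where "Gi = inv (A \<circ> J)"
  have linA: "linear A" unfolding A_def by (rule adjoint_linear[OF lin])
  have adj: "J x \<bullet> y = x \<bullet> A y" for x y unfolding A_def using adjoint_clauses(1)[OF lin, of x y] by simp
  have bijAJ: "bij (A \<circ> J)" using inv unfolding A_def .
  have linAJ: "linear (A \<circ> J)" using linA lin by (rule linear_compose[rotated])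
  have Gi1: "Gi ((A \<circ> J) x) = x" for x unfolding Gi_def by (rule inv_f_f[OF bij_is_inj[OF bijAJ]])
  have Gi2: "(A \<circ> J) (Gi y) = y" for y unfolding Gi_def by (rule surj_f_inv_f[OF bij_is_surj[OF bijAJ]])
  have linGi: "linear Gi" unfolding Gi_def
    by (rule inj_linear_imp_inv_linear[OF linAJ bij_is_inj[OF bijAJ]])
  define G where "G a = Gi (A a)" for a
  define P where "P a = J (G a)" for a
  have linG: "linear G" unfolding G_def[abs_def] using linGi linA by (rule linear_compose[rotated, unfolded o_def])
  have linP: "linear P" unfolding P_def[abs_def] using lin linG by (rule linear_compose[rotated, unfolded o_def])
  have GJ: "G (J v) = v" for v unfolding G_def using Gi1[of v] by simp
  have PJ: "P (J v) = J v" for v unfolding P_def GJ ..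
  have Pin: "P a \<bullet> b = P a \<bullet> P b" for a b
  proof -
    have "P a \<bullet> b = G a \<bullet> A b" unfolding P_def by (rule adj)
    moreover have "P a \<bullet> P b = G a \<bullet> A b"
    proof -
      have "P a \<bullet> P b = G a \<bullet> A (J (G b))" unfolding P_def[of b] unfolding P_def by (rule adj)
      also have "A (J (G b)) = A b" using Gi2[of "A b"] unfolding G_def by simp
      finally show ?thesis .
    qed
    ultimately show ?thesis by simp
  qed
  have sne: "\<sigma> \<noteq> 0" using sig by simp
  have Ainv: "inv (adjoint J \<circ> J) = Gi" unfolding Gi_def A_def ..
  define f where "f = (nuc_norm :: real^'n^'m \<Rightarrow> real)"
  define g where "g = (\<lambda>E::real^'n^'m. lam * l1_norm E)"
  have Hf: "f Z \<ge> f (X (Suc k)) + (Y k + \<sigma> *\<^sub>R (B + J (dt k) - X (Suc k) - E k)) \<bullet> (Z - X (Suc k))" for k Z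
  proof -
    let ?W = "B + J (dt k) - E k + (1/\<sigma>) *\<^sub>R Y k"
    have "\<sigma> *\<^sub>R (?W - X (Suc k)) = Y k + \<sigma> *\<^sub>R (B + J (dt k) - X (Suc k) - E k)"
      using sne by (simp add: algebra_simps)
    thus ?thesis using svt_sub[OF sig, of ?W Z] unfolding f_def stepX[symmetric] by simp
  qed
  have Hg: "g Z \<ge> g (E (Suc k)) + (Y k + \<sigma> *\<^sub>R (B + J (dth k) - X (Suc k) - E (Suc k))) \<bullet> (Z - E (Suc k))" for k Z
  proof -
    let ?W = "B + J (dth k) - X (Suc k) + (1/\<sigma>) *\<^sub>R Y k"
    have "\<sigma> *\<^sub>R (?W - E (Suc k)) = Y k + \<sigma> *\<^sub>R (B + J (dth k) - X (Suc k) - E (Suc k))"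
      using sne by (simp add: algebra_simps)
    thus ?thesis using soft_sub[OF lam sig, of ?W Z] unfolding g_def stepE[symmetric] by simp
  qed
  have HJ: "(Y k + \<sigma> *\<^sub>R (B + J (dt (Suc k)) - X (Suc k) - E (Suc k))) \<bullet> J v = 0" for k v
  proof -
    let ?u = "A (B - X (Suc k) - E (Suc k)) + (1/\<sigma>) *\<^sub>R A (Y k)"
    have d: "dt (Suc k) = - Gi ?u" using stepT2[of k] unfolding Ainv A_def .
    have "A (J (dt (Suc k))) = - ?u"
    proof -
      have "A (J (dt (Suc k))) = (A \<circ> J) (- Gi ?u)" unfolding d by simp
      also have "\<dots> = - (A \<circ> J) (Gi ?u)" by (rule linear_neg[OF linAJ])
      finally show ?thesis using Gi2 by simp
    qed
    hence e1: "A (J (dt (Suc k))) + A (B - X (Suc k) - E (Suc k)) = - ((1/\<sigma>) *\<^sub>R A (Y k))"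
      by (simp add: algebra_simps)
    have "B + J (dt (Suc k)) - X (Suc k) - E (Suc k) = J (dt (Suc k)) + (B - X (Suc k) - E (Suc k))"
      by (simp add: algebra_simps)
    hence eq2: "A (B + J (dt (Suc k)) - X (Suc k) - E (Suc k)) = A (J (dt (Suc k))) + A (B - X (Suc k) - E (Suc k))"
      by (simp only: linear_add[OF linA])
    have "A (Y k + \<sigma> *\<^sub>R (B + J (dt (Suc k)) - X (Suc k) - E (Suc k)))
        = A (Y k) + \<sigma> *\<^sub>R (A (J (dt (Suc k))) + A (B - X (Suc k) - E (Suc k)))"
      by (simp only: linear_add[OF linA] linear_scale[OF linA] eq2)
    also have "\<dots> = 0" unfolding e1 using sne by simp
    finally have "A (Y k + \<sigma> *\<^sub>R (B + J (dt (Suc k)) - X (Suc k) - E (Suc k))) = 0" .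
    hence "J v \<bullet> (Y k + \<sigma> *\<^sub>R (B + J (dt (Suc k)) - X (Suc k) - E (Suc k))) = 0" by (simp add: adj)
    thus ?thesis by (simp add: inner_commute)
  qed
  have Hdth: "J (dth k) - J (dt (Suc k)) = P (E k - E (Suc k))" for k
  proof -
    let ?c = "(1/\<sigma>) *\<^sub>R A (Y k)"
    have "dth k - dt (Suc k) = Gi (A (B - X (Suc k) - E (Suc k)) + ?c) - Gi (A (B - X (Suc k) - E k) + ?c)"
      using stepT1[of k] stepT2[of k] unfolding Ainv A_def by simp
    also have "\<dots> = Gi (A (B - X (Suc k) - E (Suc k)) + ?c - (A (B - X (Suc k) - E k) + ?c))"
      by (rule linear_diff[OF linGi, symmetric])
    also have "A (B - X (Suc k) - E (Suc k)) + ?c - (A (B - X (Suc k) - E k) + ?c) = A (E k - E (Suc k))"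
      by (simp add: linear_diff[OF linA, symmetric] algebra_simps)
    finally have "dth k - dt (Suc k) = G (E k - E (Suc k))" unfolding G_def .
    hence "J (dth k - dt (Suc k)) = P (E k - E (Suc k))" unfolding P_def by simp
    thus ?thesis by (simp add: linear_diff[OF lin])
  qed
  have contf: "continuous_on UNIV f" unfolding f_def by (rule nuc_cont)
  have contg: "continuous_on UNIV g" unfolding g_def using lam by (intro l1_cont) simp
  interpret ad: admm f g J P G B \<sigma> \<xi> X E Y dt dth
    by (rule admm.intro[where f=f and g=g and J=J and P=P and G=G and B=B and \<sigma>=\<sigma> and \<xi>=\<xi> and X=X and E=E and Y=Y and dt=dt and dth=dth, OF lin linP linG GJ PJ Pin sig xi(1) xi(2) contf contg Hf Hg HJ Hdth stepY])
  let ?C = "real (CARD('m) * CARD('n))"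
  have Cpos: "?C > 0" by simp
  obtain Xb db Eb Yb where K0: "(\<forall>Z. f Xb + Yb \<bullet> (Z - Xb) \<le> f Z) \<and> (\<forall>Z. g Eb + Yb \<bullet> (Z - Eb) \<le> g Z)
           \<and> (\<forall>v. Yb \<bullet> J v = 0) \<and> B + J db - Xb - Eb = 0"
  proof -
    have "\<exists>Xb db Eb Yb. (\<forall>Z. f Xb + Yb \<bullet> (Z - Xb) \<le> f Z) \<and> (\<forall>Z. g Eb + Yb \<bullet> (Z - Eb) \<le> g Z)
           \<and> (\<forall>v. Yb \<bullet> J v = 0) \<and> B + J db - Xb - Eb = 0"
    proof (rule kkt_exists[OF lin linP linG PJ Pin _ _ _ contf contg, where cf = "1 / ?C" and cg = lam and Lg = "lam * ?C"])
      show "P a = J (G a)" for a unfolding P_def ..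
      show "convex_on UNIV f" unfolding f_def by (rule nuc_convex)
      show "convex_on UNIV g" unfolding g_def using lam by (intro l1_convex) simp
      show "0 < 1 / ?C" by simp
      show "1 / ?C * norm X \<le> f X" for X
        using nuc_coercive[of X] Cpos unfolding f_def by (simp add: field_simps)
      show "0 < lam" by (rule lam)
      show "lam * norm E \<le> g E" for E unfolding g_def using norm_le_l1[of E] lam by simp
      show "norm Y \<le> lam * ?C" if "\<And>Z. g E + Y \<bullet> (Z - E) \<le> g Z" for E Y
        by (rule l1_subgrad_bnd[OF lam]) (use that in \<open>simp add: g_def\<close>)
    qed
    thus ?thesis using that by blast
  qed
  have K: "ad.kkt Xb db Eb Yb" unfolding ad.kkt_def using K0 by blast
  obtain Xl dl El Yl where conv: "X \<longlonglongrightarrow> Xl" "dt \<longlonglongrightarrow> dl" "E \<longlonglongrightarrow> El" "Y \<longlonglongrightarrow> Yl"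
    and Kl: "ad.kkt Xl dl El Yl"
    using ad.converge[OF K] by blast
  have kf: "f Xl + Yl \<bullet> (Z - Xl) \<le> f Z" and kg: "g El + Yl \<bullet> (Z - El) \<le> g Z"
    and kJ: "Yl \<bullet> J v = 0" and kr: "B + J dl - Xl - El = 0" for Z v
    using Kl unfolding ad.kkt_def by auto
  have "optimal_P B J lam Xl dl El"
    unfolding optimal_P_def
  proof (intro conjI allI impI)
    show "B + J dl = Xl + El" using kr by (simp add: algebra_simps)
    fix X' dt' E' assume feas: "B + J dt' = X' + E'"
    have "Yl \<bullet> (X' - Xl) + Yl \<bullet> (E' - El) = Yl \<bullet> J (dt' - dl)"
    proof -
      have a: "X' + E' = B + J dt'" using feas by simp
      have b: "Xl + El = B + J dl" using kr by (simp add: algebra_simps)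
      have "X' - Xl + (E' - El) = (X' + E') - (Xl + El)" by (simp add: algebra_simps)
      also have "\<dots> = J dt' - J dl" unfolding a b by simp
      also have "\<dots> = J (dt' - dl)" by (simp add: linear_diff[OF lin])
      finally have "X' - Xl + (E' - El) = J (dt' - dl)" .
      thus ?thesis by (simp add: inner_add_right[symmetric])
    qed
    also have "\<dots> = 0" by (rule kJ)
    finally have "Yl \<bullet> (X' - Xl) + Yl \<bullet> (E' - El) = 0" .
    thus "nuc_norm Xl + lam * l1_norm El \<le> nuc_norm X' + lam * l1_norm E'"
      using kf[of X'] kg[of E'] unfolding f_def g_def by linarith
  qed
  thus ?thesis using conv by blast
qed

end
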